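(* Let $\sigma\in\,]-\tfrac32,\tfrac12[$, $\sigma\neq-\tfrac12$, and let $(\lambda,\zeta)\in\mathbb{S}\times(\mathbb{Z}^2\setminus\{0\})$, $\zeta=(\xi,\eta)$, $\omega^2=\lambda+\nu|\zeta|^2$. The operator $$\mathcal{L}_0:\ (H^{\sigma+2}_\zeta)^2_{\mathrm{div}}\times\mathbb{C}\times H^{\sigma+2}_\zeta\to (H^{\sigma}_\zeta)^3,\qquad (u,v,p_0,\theta)\mapsto \begin{pmatrix}(\omega^2-\nu\partial_{zz})u+i\xi p_0\\ (\omega^2-\nu\partial_{zz})v+i\eta p_0\\ (\omega^2-\nu\partial_{zz})\theta\end{pmatrix}=\begin{pmatrix}f_1\\ f_2\\ f_3\end{pmatrix}$$ is continuous and bijective. Moreover $Y=(u,v)$ splits as $Y=Y_1+Y_2$ and, writing $F=(f_1,f_2)$, the following estimates hold with a constant $C$ independent of $(\lambda,\zeta)$: $$\begin{array}{lrcl} (a)&|\zeta|\,|p_0| &\leq& C\langle\omega\rangle^2 M_\sigma \|F\|_{\sigma,\zeta},\\ (b)&M_{-\sigma-2}[M_{-\sigma}]^{-1}\|Y_1\|_{\sigma,\zeta} + \|Y_1\|_{\sigma+2,\zeta} &\leq& C \langle\omega\rangle^2 M_\sigma M_{-\sigma-2}\|F\|_{\sigma,\zeta},\\ (c)&\langle\omega\rangle^2 \|Y_2\|_{\sigma,\zeta} + \|Y_2\|_{\sigma+2,\zeta} &\leq& C \|F\|_{\sigma,\zeta},\\ (d)& \langle\omega\rangle^2 \|\theta\|_{\sigma,\zeta}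 + \|\theta\|_{\sigma+2,\zeta} &\leq& C \|f_{3}\|_{\sigma,\zeta}. \end{array}$$
   Context: Let $a>0$, $\nu>0$, $\alpha,\beta,\gamma>0$ constants, $\Omega=\mathbb{T}^2\times(0,a)$. For $\zeta\in\mathbb{Z}^2\setminus\{0\}$ and $s\in\mathbb{R}$, $H^s_\zeta$ is the Hilbert space of functions $f(z)=\sum_{k\ge1}f_k e_k(z)$ on $(0,a)$, $e_k(z)=\sqrt{2/a}\sin(k\pi z/a)$, with norm $\|f\|_{s,\zeta}^2=\sum_{k\ge1}(1+\nu k^2+\nu|\zeta|^2)^s|f_k|^2$ (the same notation is used for the product norms on $(H^s_\zeta)^2$, $(H^s_\zeta)^3$), and $(H^{\sigma+2}_\zeta)^2_{\mathrm{div}}=\{(u,v)\in(H^{\sigma+2}_\zeta)^2:\int_0^a(\xi u+\eta v)\,dz=0\}$. Set $\langle\zeta\rangle=1+|\zeta|$, $\langle\omega\rangle^2=|\lambda|+\langle\zeta\rangle^2$ and $M_s(\lambda,\zeta)=\big(\sum_{k\ge1}\frac{1}{k^2(k^4+\langle\omega\rangle^4)(k^2+\langle\zeta\rangle^2)^s}\big)^{1/2}$ (defined for $s>-\tfrac52$). The set $\mathbb{S}=\{-\delta_2-\mu_1+i\mu_2:(\mu_1,\mu_2)\in\mathbb{R}^2,\ |\mu_2|\ge\mu_1/\delta_1\}$, where $0<\delta_2<\min(\frac{\nu\pi^2}{2a^2},\frac{\nu}{2})$ and $\delta_1>0$ is chosen small enough that $\mathbb{S}$ contains no eigenvalue of $-P$.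 Here $P$ is the linear Primitive Equations operator: with $\mathcal{H}$ (resp. $\mathcal{V}$) the closure in $L^2$ (resp. $H^1$) of smooth triples $X=(u,v,\theta)$ periodic in $x,y$, vanishing at $z=0,a$ and with $\int_0^a(\partial_x u+\partial_y v)dz=0$, inner products $(X,X')_{\mathcal{H}}=\int_\Omega(u\bar u'+v\bar v'+\frac{\beta}{\gamma}\theta\bar\theta')$, $(X,X')_{\mathcal{V}}=\int_\Omega(\nabla u\cdot\nabla\bar u'+\nabla v\cdot\nabla\bar v'+\frac{\beta}{\gamma}\nabla\theta\cdot\nabla\bar\theta')$, $w=-\int_0^z(\partial_xu+\partial_yv)$, $B(X,X')=-(\theta,w')_{L^2}+(w,\theta')_{L^2}$, $C(X,X')=-(v,u')_{L^2}+(u,v')_{L^2}$; $\lambda$ is an eigenvalue of $-P$ if there is $X\in\mathcal{V}\setminus\{0\}$ with $\lambda(X,X')_{\mathcal{H}}+\nu(X,X')_{\mathcal{V}}+\beta B(X,X')+\alpha C(X,X')=0$ for all $X'\in\mathcal{V}$. (Such a $\delta_1$ exists since all these eigenvalues satisfy $\Re\lambda\le-\nu\pi^2/a^2$ and $|\Im\lambda|\le2\alpha+2a\sqrt{\beta\gamma}\sqrt{-\Re\lambda/\nu}$.) *)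

theory Defs
  imports "HOL-Analysis.Analysis"
begin

text \<open>Elements of H^s_zeta are represented by their sine-coefficient sequences
  f_k (k >= 1) with respect to e_k(z) = sqrt(2/a) sin(k pi z / a); index 0 is unused
  and required to be 0 so that the representation is canonical.
  zeta = (xi, eta) in Z^2.\<close>

type_synonym cseq = "nat \<Rightarrow> complex"

definition zabs2 :: "int \<times> int \<Rightarrow> real" where
  "zabs2 \<zeta> = real_of_int (fst \<zeta>)^2 + real_of_int (snd \<zeta>)^2"

definition zabs :: "int \<times> int \<Rightarrow> real" where
  "zabs \<zeta> = sqrt (zabs2 \<zeta>)"

definition hweight :: "real \<Rightarrow> real \<Rightarrow> int \<times> int \<Rightarrow> nat \<Rightarrow> real" where
  "hweight \<nu> s \<zeta> k = (1 + \<nu> * real k ^ 2 + \<nu> * zabs2 \<zeta>) powr s"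

definition Hs :: "real \<Rightarrow> real \<Rightarrow> int \<times> int \<Rightarrow> cseq set" where
  "Hs \<nu> s \<zeta> = {f. f 0 = 0 \<and> summable (\<lambda>k. hweight \<nu> s \<zeta> k * (cmod (f k))^2)}"

definition hnorm :: "real \<Rightarrow> real \<Rightarrow> int \<times> int \<Rightarrow> cseq \<Rightarrow> real" where
  "hnorm \<nu> s \<zeta> f = sqrt (\<Sum>k. hweight \<nu> s \<zeta> k * (cmod (f k))^2)"

definition hnorm2 :: "real \<Rightarrow> real \<Rightarrow> int \<times> int \<Rightarrow> cseq \<times> cseq \<Rightarrow> real" where
  "hnorm2 \<nu> s \<zeta> Y = sqrt ((hnorm \<nu> s \<zeta> (fst Y))^2 + (hnorm \<nu> s \<zeta> (snd Y))^2)"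

definition hnorm3 :: "real \<Rightarrow> real \<Rightarrow> int \<times> int \<Rightarrow> cseq \<times> cseq \<times> cseq \<Rightarrow> real" where
  "hnorm3 \<nu> s \<zeta> F = sqrt ((hnorm \<nu> s \<zeta> (fst F))^2 + (hnorm \<nu> s \<zeta> (fst (snd F)))^2
                           + (hnorm \<nu> s \<zeta> (snd (snd F)))^2)"

text \<open>Sine coefficients of the constant function 1 on (0,a):
  int_0^a e_k = sqrt(2/a) * a (1 - (-1)^k) / (k pi).\<close>
definition onecoef :: "real \<Rightarrow> nat \<Rightarrow> real" where
  "onecoef a k = (if k = 0 then 0 else sqrt (2 / a) * a * (1 - (-1) ^ k) / (real k * pi))"

text \<open>int_0^a (xi u + eta v) dz = 0, expressed through the sine coefficients.\<close>
definition divfree :: "real \<Rightarrow> int \<times> int \<Rightarrow> cseq \<Rightarrow> cseq \<Rightarrow> bool" where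
  "divfree a \<zeta> u v \<longleftrightarrow>
     (\<Sum>k. complex_of_real (onecoef a k) *
            (of_int (fst \<zeta>) * u k + of_int (snd \<zeta>) * v k)) = 0"

definition L0dom :: "real \<Rightarrow> real \<Rightarrow> real \<Rightarrow> int \<times> int \<Rightarrow> (cseq \<times> cseq \<times> complex \<times> cseq) set" where
  "L0dom a \<nu> \<sigma> \<zeta> = {(u, v, p0, \<theta>). u \<in> Hs \<nu> (\<sigma> + 2) \<zeta> \<and> v \<in> Hs \<nu> (\<sigma> + 2) \<zeta>
        \<and> divfree a \<zeta> u v \<and> \<theta> \<in> Hs \<nu> (\<sigma> + 2) \<zeta>}"

definition L0cod :: "real \<Rightarrow> real \<Rightarrow> int \<times> int \<Rightarrow> (cseq \<times> cseq \<times> cseq) set" where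
  "L0cod \<nu> \<sigma> \<zeta> = Hs \<nu> \<sigma> \<zeta> \<times> Hs \<nu> \<sigma> \<zeta> \<times> Hs \<nu> \<sigma> \<zeta>"

definition L0domnorm :: "real \<Rightarrow> real \<Rightarrow> int \<times> int \<Rightarrow> cseq \<times> cseq \<times> complex \<times> cseq \<Rightarrow> real" where
  "L0domnorm \<nu> \<sigma> \<zeta> X = (case X of (u, v, p0, \<theta>) \<Rightarrow>
      sqrt ((hnorm \<nu> (\<sigma> + 2) \<zeta> u)^2 + (hnorm \<nu> (\<sigma> + 2) \<zeta> v)^2 + (cmod p0)^2
            + (hnorm \<nu> (\<sigma> + 2) \<zeta> \<theta>)^2))"

definition sub4 :: "cseq \<times> cseq \<times> complex \<times> cseq \<Rightarrow> cseq \<times> cseq \<times> complex \<times> cseq \<Rightarrow> cseq \<times> cseq \<times> complex \<times> cseq" where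
  "sub4 X X' = (case X of (u, v, p, t) \<Rightarrow> case X' of (u', v', p', t') \<Rightarrow>
      (\<lambda>k. u k - u' k, \<lambda>k. v k - v' k, p - p', \<lambda>k. t k - t' k))"

definition sub3 :: "cseq \<times> cseq \<times> cseq \<Rightarrow> cseq \<times> cseq \<times> cseq \<Rightarrow> cseq \<times> cseq \<times> cseq" where
  "sub3 F F' = (case F of (f1, f2, f3) \<Rightarrow> case F' of (g1, g2, g3) \<Rightarrow>
      (\<lambda>k. f1 k - g1 k, \<lambda>k. f2 k - g2 k, \<lambda>k. f3 k - g3 k))"

text \<open>omega^2 = lambda + nu |zeta|^2; the symbol of omega^2 - nu d_zz on e_k is
  omega^2 + nu (k pi / a)^2, since d_zz e_k = -(k pi/a)^2 e_k.\<close>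
definition omega2 :: "real \<Rightarrow> complex \<Rightarrow> int \<times> int \<Rightarrow> complex" where
  "omega2 \<nu> lam \<zeta> = lam + of_real (\<nu> * zabs2 \<zeta>)"

definition symb :: "real \<Rightarrow> real \<Rightarrow> complex \<Rightarrow> int \<times> int \<Rightarrow> nat \<Rightarrow> complex" where
  "symb a \<nu> lam \<zeta> k = omega2 \<nu> lam \<zeta> + of_real (\<nu> * (real k * pi / a)^2)"

definition L0 :: "real \<Rightarrow> real \<Rightarrow> complex \<Rightarrow> int \<times> int \<Rightarrow> cseq \<times> cseq \<times> complex \<times> cseq
                   \<Rightarrow> cseq \<times> cseq \<times> cseq" where
  "L0 a \<nu> lam \<zeta> X = (case X of (u, v, p0, \<theta>) \<Rightarrow>
     (\<lambda>k. symb a \<nu> lam \<zeta> k * u k + \<i> * of_int (fst \<zeta>) * p0 * of_real (onecoef a k),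
      \<lambda>k. symb a \<nu> lam \<zeta> k * v k + \<i> * of_int (snd \<zeta>) * p0 * of_real (onecoef a k),
      \<lambda>k. symb a \<nu> lam \<zeta> k * \<theta> k))"

definition L0_continuous :: "real \<Rightarrow> real \<Rightarrow> int \<times> int
     \<Rightarrow> (cseq \<times> cseq \<times> complex \<times> cseq \<Rightarrow> cseq \<times> cseq \<times> cseq) \<Rightarrow> (cseq \<times> cseq \<times> complex \<times> cseq) set \<Rightarrow> bool" where
  "L0_continuous \<nu> \<sigma> \<zeta> L D \<longleftrightarrow>
     (\<forall>X\<in>D. \<forall>\<epsilon>>0. \<exists>\<delta>>0. \<forall>X'\<in>D.
        L0domnorm \<nu> \<sigma> \<zeta> (sub4 X' X) < \<delta> \<longrightarrow> hnorm3 \<nu> \<sigma> \<zeta> (sub3 (L X') (L X)) < \<epsilon>)"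

definition jzeta :: "int \<times> int \<Rightarrow> real" where
  "jzeta \<zeta> = 1 + zabs \<zeta>"

definition jomega2 :: "complex \<Rightarrow> int \<times> int \<Rightarrow> real" where
  "jomega2 lam \<zeta> = cmod lam + (jzeta \<zeta>)^2"

definition Mfun :: "real \<Rightarrow> complex \<Rightarrow> int \<times> int \<Rightarrow> real" where
  "Mfun s lam \<zeta> = sqrt (\<Sum>j. 1 / (real (Suc j) ^ 2 * (real (Suc j) ^ 4 + (jomega2 lam \<zeta>)^2)
                           * (real (Suc j) ^ 2 + (jzeta \<zeta>)^2) powr s))"

definition Sset :: "real \<Rightarrow> real \<Rightarrow> complex set" where
  "Sset \<delta>1 \<delta>2 = {Complex (- \<delta>2 - \<mu>1) \<mu>2 | \<mu>1 \<mu>2. \<bar>\<mu>2\<bar> \<ge> \<mu>1 / \<delta>1}"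

end

theory Submission
  imports Defs
begin


lemma amgm: fixes x y t :: real assumes "t > 0" shows "2*x*y \<le> t*x^2 + y^2/t"
proof -
  have "t*x^2 + y^2/t - 2*x*y = (t*x-y)^2/t" using assms by (simp add: field_simps power2_eq_square)
  moreover have "(t*x-y)^2/t \<ge> 0" using assms by simp
  ultimately show ?thesis by linarith
qed

lemma cs_real: fixes S A B :: real
  assumes A: "A \<ge> 0" and B: "B \<ge> 0" and h: "\<And>t. t > 0 \<Longrightarrow> S \<le> (t*A + B/t)/2"
  shows "S \<le> sqrt A * sqrt B"
proof (cases "A > 0 \<and> B > 0")
  case True
  define p where "p = sqrt A"
  define q where "q = sqrt B"
  have pq: "p > 0" "q > 0" "A = p*p" "B = q*q" using True A B by (simp_all add: p_def q_def)
  define t where "t = q / p"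
  have tp: "t > 0" using pq by (simp add: t_def)
  have 1: "t*A = sqrt A * sqrt B" unfolding p_def[symmetric] q_def[symmetric] t_def pq(3) using pq by simp
  have 2: "B/t = sqrt A * sqrt B" unfolding p_def[symmetric] q_def[symmetric] t_def pq(4) using pq by simp
  show ?thesis using h[OF tp] 1 2 by simp
next
  case False
  show ?thesis
  proof (rule ccontr)
    assume "\<not> ?thesis"
    hence Sp: "S > 0" using False A B by auto
    show False
    proof (cases "A = 0")
      case True
      define t where "t = (B+1)/S"
      have tp: "t > 0" using Sp B by (simp add: t_def)
      have "S \<le> (B/t)/2" using h[OF tp] True by simp
      also have "B/t = B*S/(B+1)" using Sp B by (simp add: t_def)
      finally have "S*(B+1)*2 \<le> B*S" using B by (simp add: field_simps)
      moreover have "B*S \<ge> 0" using Sp B by simp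
      ultimately show False using Sp B by (simp add: algebra_simps)
    next
      case False
      hence B0: "B = 0" using \<open>\<not>(A>0 \<and> B>0)\<close> A B by auto
      define t where "t = S/(A+1)"
      have tp: "t > 0" using Sp A by (simp add: t_def)
      have "S \<le> (t*A)/2" using h[OF tp] B0 by simp
      hence "S*(A+1)*2 \<le> S*A" using A by (simp add: t_def field_simps)
      moreover have "A*S \<ge> 0" using Sp A by simp
      ultimately show False using Sp A by (simp add: algebra_simps)
    qed
  qed
qed

lemma powr_cmp: fixes W Q c1 c2 s :: real
  assumes "0 < c1" "c1*Q \<le> W" "W \<le> c2*Q" "0 < Q"
  shows "W powr s \<le> max (c1 powr s) (c2 powr s) * Q powr s"
proof -
  define r where "r = W/Q"
  have W: "W = r*Q" using assms by (simp add: r_def)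
  have r1: "c1 \<le> r" "r \<le> c2" using assms by (simp_all add: r_def pos_le_divide_eq pos_divide_le_eq)
  have rp: "r > 0" using r1 assms by simp
  have "r powr s \<le> max (c1 powr s) (c2 powr s)"
  proof (cases "s \<ge> 0")
    case True
    have "r powr s \<le> c2 powr s" by (rule powr_mono2[OF True]) (use rp r1 in auto)
    thus ?thesis by linarith
  next
    case False
    have "r powr s \<le> c1 powr s" by (rule powr_mono2') (use False r1 assms in auto)
    thus ?thesis by linarith
  qed
  moreover have "W powr s = r powr s * Q powr s" using W rp assms by (simp add: powr_mult)
  moreover have "r powr s * Q powr s \<le> max (c1 powr s) (c2 powr s) * Q powr s"
    by (rule mult_right_mono) (fact, simp)
  ultimately show ?thesis by linarith
qed

lemma Qpow: fixes x B e :: real assumes x1: "x \<ge> 1" and B0: "B \<ge> 0"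
  shows "(x^2 + B) powr e \<le> (1+B) powr (abs e) * x powr (2*e)"
proof -
  have x0: "x > 0" using x1 by simp
  have x2: "x^2 \<ge> 1" using x1 by (simp add: one_le_power)
  have kk: "x powr (2*e) = (x^2) powr e"
  proof -
    have "x^2 = x powr 2" using x0 by (simp add: powr_numeral)
    hence "(x^2) powr e = x powr (2*e)" by (simp add: powr_powr)
    thus ?thesis by simp
  qed
  show ?thesis
  proof (cases "e \<ge> 0")
    case True
    have "B \<le> x^2*B" using mult_right_mono[of 1 "x^2" B] x2 B0 by simp
    hence le: "x^2 + B \<le> x^2*(1+B)" by (simp add: algebra_simps)
    have "(x^2 + B) powr e \<le> (x^2*(1+B)) powr e"
      by (rule powr_mono2[OF True _ le]) (use B0 in simp)
    also have "\<dots> = (x^2) powr e * (1+B) powr e" using B0 by (simp add: powr_mult)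
    finally show ?thesis using True kk by (simp add: mult.commute)
  next
    case False
    have "(x^2 + B) powr e \<le> (x^2) powr e" by (rule powr_mono2') (use False x0 B0 in auto)
    also have "\<dots> \<le> (1+B) powr (abs e) * (x^2) powr e"
    proof -
      have "1 \<le> (1+B) powr (abs e)" using B0 by (intro ge_one_powr_ge_zero) auto
      thus ?thesis using mult_right_mono[of 1 "(1+B) powr (abs e)" "(x^2) powr e"] by simp
    qed
    finally show ?thesis using kk by simp
  qed
qed



locale setting =
  fixes a \<nu> \<delta>1 \<delta>2 \<sigma> :: real
  assumes a_pos: "a > 0" and nu_pos: "\<nu> > 0" and d2pos: "0 < \<delta>2" and d2lt: "\<delta>2 < \<nu>/2"
    and d1pos: "\<delta>1 > 0" and sig_lo: "-3/2 < \<sigma>" and sig_hi: "\<sigma> < 1/2"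
begin

definition "\<kappa>1 = 1/(8+7*\<delta>1)"
definition "mT = min (\<nu>/4) (\<nu>*pi^2/a^2)"
definition "kS = \<kappa>1 * min 1 mT"
definition "KS = 1 + \<nu> + \<nu>*pi^2/a^2"
definition "cw1 = \<nu>/4"
definition "cw2 = 1 + 2*\<nu>"

lemma consts_pos: "\<kappa>1 > 0" "mT > 0" "kS > 0" "KS \<ge> 1" "cw1 > 0" "cw2 > 0"
  using a_pos nu_pos d1pos by (auto simp: \<kappa>1_def mT_def kS_def KS_def cw1_def cw2_def)

lemma sector:
  assumes "lam \<in> Sset \<delta>1 \<delta>2" "T \<ge> 2*\<delta>2"
  shows "\<kappa>1 * (cmod lam + T) \<le> cmod (lam + complex_of_real T)"
proof -
  obtain \<mu>1 \<mu>2 where lam: "lam = Complex (-\<delta>2-\<mu>1) \<mu>2" and h: "\<bar>\<mu>2\<bar> \<ge> \<mu>1/\<delta>1"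
    using assms(1) unfolding Sset_def by auto
  have h': "\<mu>1 \<le> \<delta>1*\<bar>\<mu>2\<bar>" using h d1pos by (simp add: pos_divide_le_eq mult.commute)
  define z where "z = lam + complex_of_real T"
  have Rez: "Re z = T - \<delta>2 - \<mu>1" "Im z = \<mu>2" by (simp_all add: z_def lam)
  have n1: "\<bar>T-\<delta>2-\<mu>1\<bar> \<le> cmod z" using abs_Re_le_cmod[of z] Rez by simp
  have n2: "\<bar>\<mu>2\<bar> \<le> cmod z" using abs_Im_le_cmod[of z] Rez by simp
  have nl: "cmod lam \<le> \<bar>\<delta>2+\<mu>1\<bar> + \<bar>\<mu>2\<bar>" using cmod_le[of lam] by (simp add: lam)
  have m: "\<delta>1*\<bar>\<mu>2\<bar> \<le> \<delta>1 * cmod z" using n2 d1pos by (simp add: mult_left_mono)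
  have X: "cmod lam + T \<le> (8+7*\<delta>1) * cmod z"
  proof -
    have "cmod lam + T \<le> 8*cmod z + 7*(\<delta>1*cmod z)"
    proof (cases "\<mu>1 \<le> T/4")
      case True
      show ?thesis
      proof (cases "\<mu>1 \<ge> -\<delta>2")
        case True
        hence "\<bar>\<delta>2+\<mu>1\<bar> = \<delta>2+\<mu>1" by simp
        moreover have "\<bar>T-\<delta>2-\<mu>1\<bar> = T-\<delta>2-\<mu>1" using \<open>\<mu>1 \<le> T/4\<close> assms(2) d2pos by simp
        moreover have "0 \<le> \<delta>1*cmod z" using d1pos by simp
        ultimately show ?thesis using n1 n2 nl \<open>\<mu>1 \<le> T/4\<close> assms(2) by linarith
      next
        case False
        hence "\<bar>\<delta>2+\<mu>1\<bar> = -(\<delta>2+\<mu>1)" by simp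
        moreover have "\<bar>T-\<delta>2-\<mu>1\<bar> = T-\<delta>2-\<mu>1" using False assms(2) d2pos by simp
        moreover have "0 \<le> \<delta>1*cmod z" using d1pos by simp
        ultimately show ?thesis using n1 n2 nl by linarith
      qed
    next
      case False
      hence "\<bar>\<delta>2+\<mu>1\<bar> = \<delta>2+\<mu>1" using assms(2) d2pos by simp
      thus ?thesis using n2 nl h' m False assms(2) by linarith
    qed
    thus ?thesis by (simp add: algebra_simps)
  qed
  have "(cmod lam + T) / (8+7*\<delta>1) \<le> cmod z" using X d1pos by (simp add: pos_divide_le_eq mult.commute)
  thus ?thesis by (simp add: \<kappa>1_def z_def)
qed

context
  fixes lam :: complex and \<zeta> :: "int \<times> int"
  assumes lamS: "lam \<in> Sset \<delta>1 \<delta>2" and zne: "\<zeta> \<noteq> (0,0)"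
begin

lemma z2ge1: "zabs2 \<zeta> \<ge> 1"
proof -
  obtain x y where zz: "\<zeta> = (x,y)" by fastforce
  have "x \<noteq> 0 \<or> y \<noteq> 0" using zne zz by auto
  moreover have "r \<noteq> 0 \<Longrightarrow> real_of_int r ^2 \<ge> 1" for r :: int
  proof -
    assume "r \<noteq> 0"
    hence "1 \<le> \<bar>r\<bar>" by arith
    hence "1 \<le> \<bar>real_of_int r\<bar>" by linarith
    hence "1^2 \<le> \<bar>real_of_int r\<bar>^2" by (intro power_mono) auto
    thus ?thesis by simp
  qed
  ultimately have "1 \<le> (real_of_int x)^2 \<or> 1 \<le> (real_of_int y)^2" by blast
  moreover have "0 \<le> (real_of_int x)^2" "0 \<le> (real_of_int y)^2" by simp_all
  ultimately have "1 \<le> (real_of_int x)^2 + (real_of_int y)^2" by linarith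
  thus ?thesis unfolding zabs2_def zz by simp
qed

lemma zabs_props: "zabs \<zeta> ^2 = zabs2 \<zeta>" "zabs \<zeta> \<ge> 1"
  using z2ge1 by (simp_all add: zabs_def)

lemma jz_props: "1 \<le> jzeta \<zeta>^2" "zabs2 \<zeta> \<le> jzeta \<zeta>^2" "jzeta \<zeta>^2 \<le> 4*zabs2 \<zeta>"
proof -
  have z: "zabs \<zeta> \<ge> 1" "zabs \<zeta> ^2 = zabs2 \<zeta>" using zabs_props by auto
  have "jzeta \<zeta>^2 = 1 + 2*zabs \<zeta> + zabs \<zeta>^2" by (simp add: jzeta_def power2_eq_square algebra_simps)
  moreover have "zabs \<zeta> \<le> zabs \<zeta>^2" using z(1) by (simp add: power2_eq_square)
  ultimately show "1 \<le> jzeta \<zeta>^2" "zabs2 \<zeta> \<le> jzeta \<zeta>^2" "jzeta \<zeta>^2 \<le> 4*zabs2 \<zeta>"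
    using z by linarith+
qed

lemma Om_props: "jzeta \<zeta>^2 \<le> jomega2 lam \<zeta>" "1 \<le> jomega2 lam \<zeta>" "cmod lam \<le> jomega2 lam \<zeta>"
  using jz_props norm_ge_zero[of lam] unfolding jomega2_def by linarith+

definition "T k = \<nu>*zabs2 \<zeta> + \<nu>*(real k*pi/a)^2"

lemma symb_eq: "symb a \<nu> lam \<zeta> k = lam + complex_of_real (T k)"
  by (simp add: symb_def omega2_def T_def)

lemma T_bounds: "2*\<delta>2 \<le> T k" "mT * (real k^2 + jzeta \<zeta>^2) \<le> T k"
   "T k \<le> (KS - 1) * (real k^2 + jzeta \<zeta>^2)"
proof -
  have k0: "0 \<le> \<nu>*(real k*pi/a)^2" using nu_pos by simp
  have e: "\<nu>*(real k*pi/a)^2 = (\<nu>*pi^2/a^2) * real k^2" by (simp add: power_divide power_mult_distrib)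
  have z: "1 \<le> zabs2 \<zeta>" "zabs2 \<zeta> \<le> jzeta \<zeta>^2" "jzeta \<zeta>^2 \<le> 4*zabs2 \<zeta>" using z2ge1 jz_props by auto
  have "\<nu> \<le> \<nu>*zabs2 \<zeta>" using z nu_pos by simp
  thus "2*\<delta>2 \<le> T k" using d2lt k0 unfolding T_def by linarith
  have A: "mT * jzeta \<zeta>^2 \<le> \<nu> * zabs2 \<zeta>"
  proof -
    have "mT \<le> \<nu>/4" unfolding mT_def by (rule min.cobounded1)
    hence "mT * jzeta \<zeta>^2 \<le> (\<nu>/4) * jzeta \<zeta>^2" by (rule mult_right_mono) simp
    also have "\<dots> \<le> (\<nu>/4) * (4*zabs2 \<zeta>)" using z nu_pos by (intro mult_left_mono) auto
    also have "\<dots> = \<nu> * zabs2 \<zeta>" by simp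
    finally show ?thesis .
  qed
  have "mT \<le> \<nu>*pi^2/a^2" unfolding mT_def by (rule min.cobounded2)
  hence B: "mT * real k^2 \<le> (\<nu>*pi^2/a^2) * real k^2" by (rule mult_right_mono) simp
  show "mT * (real k^2 + jzeta \<zeta>^2) \<le> T k" using A B e unfolding T_def by (simp add: algebra_simps)
  have "zabs2 \<zeta> \<le> real k^2 + jzeta \<zeta>^2" using z zero_le_power2[of "real k"] by linarith
  hence C: "\<nu> * zabs2 \<zeta> \<le> \<nu> * (real k^2 + jzeta \<zeta>^2)" using nu_pos by (intro mult_left_mono) auto
  have D: "(\<nu>*pi^2/a^2) * real k^2 \<le> (\<nu>*pi^2/a^2) * (real k^2 + jzeta \<zeta>^2)"
    using nu_pos a_pos by (intro mult_left_mono) auto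
  show "T k \<le> (KS - 1) * (real k^2 + jzeta \<zeta>^2)" using C D e unfolding T_def KS_def by (simp add: algebra_simps)
qed

lemma symb_lower: "kS * (real k^2 + jomega2 lam \<zeta>) \<le> cmod (symb a \<nu> lam \<zeta> k)"
proof -
  have s: "\<kappa>1 * (cmod lam + T k) \<le> cmod (symb a \<nu> lam \<zeta> k)"
    using sector[OF lamS T_bounds(1)] by (simp add: symb_eq)
  have "min 1 mT * (real k^2 + jomega2 lam \<zeta>) = min 1 mT * cmod lam + min 1 mT * (real k^2 + jzeta \<zeta>^2)"
    by (simp add: jomega2_def algebra_simps)
  also have "\<dots> \<le> cmod lam + T k"
  proof -
    have "min 1 mT * cmod lam \<le> cmod lam" by (rule mult_left_le_one_le) (use consts_pos in auto)
    moreover have "min 1 mT * (real k^2 + jzeta \<zeta>^2) \<le> mT * (real k^2 + jzeta \<zeta>^2)"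
      by (intro mult_right_mono) auto
    ultimately show ?thesis using T_bounds(2)[of k] by linarith
  qed
  finally have "\<kappa>1 * (min 1 mT * (real k^2 + jomega2 lam \<zeta>)) \<le> \<kappa>1 * (cmod lam + T k)"
    using consts_pos by (intro mult_left_mono) auto
  thus ?thesis using s by (simp add: kS_def mult.assoc)
qed

lemma symb_upper: "cmod (symb a \<nu> lam \<zeta> k) \<le> KS * (real k^2 + jomega2 lam \<zeta>)"
proof -
  have "cmod (symb a \<nu> lam \<zeta> k) \<le> cmod lam + \<bar>T k\<bar>" unfolding symb_eq using norm_triangle_ineq[of lam "complex_of_real (T k)"] by simp
  also have "\<bar>T k\<bar> = T k" using T_bounds(1)[of k] d2pos by simp
  also have "cmod lam + T k \<le> KS * (real k^2 + jomega2 lam \<zeta>)"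
  proof -
    have "(KS - 1) * (real k^2 + jzeta \<zeta>^2) \<le> KS * (real k^2 + jzeta \<zeta>^2)" by (simp add: algebra_simps)
    moreover have "cmod lam \<le> KS * cmod lam" using consts_pos by (simp add: mult_le_cancel_right1)
    moreover have "0 \<le> real k^2 + jzeta \<zeta>^2" by simp
    moreover have "KS * (real k^2 + jomega2 lam \<zeta>) = KS * cmod lam + KS*(real k^2 + jzeta \<zeta>^2)"
      by (simp add: jomega2_def algebra_simps)
    moreover have "(KS - 1) * (real k^2 + jzeta \<zeta>^2) = KS*(real k^2 + jzeta \<zeta>^2) - (real k^2 + jzeta \<zeta>^2)"
      by (simp add: algebra_simps)
    ultimately show ?thesis using T_bounds(3)[of k] by linarith
  qed
  finally show ?thesis .
qed

lemma P_pos: "real k^2 + jomega2 lam \<zeta> \<ge> 1" using Om_props zero_le_power2[of "real k"] by linarith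

lemma symb_nz: "symb a \<nu> lam \<zeta> k \<noteq> 0"
  using symb_lower[of k] P_pos[of k] consts_pos by (smt (verit) mult_pos_pos norm_zero)

definition "W k = 1 + \<nu>*real k^2 + \<nu>*zabs2 \<zeta>"
definition "Q k = real k^2 + jzeta \<zeta>^2"

lemma hweight_eq: "hweight \<nu> s \<zeta> k = W k powr s" by (simp add: hweight_def W_def)

lemma W_bounds: "cw1 * Q k \<le> W k" "W k \<le> cw2 * Q k" "Q k \<ge> 1" "W k \<ge> 1"
proof -
  have z: "1 \<le> zabs2 \<zeta>" "zabs2 \<zeta> \<le> jzeta \<zeta>^2" "jzeta \<zeta>^2 \<le> 4*zabs2 \<zeta>" using z2ge1 jz_props by auto
  show "Q k \<ge> 1" using z unfolding Q_def by (smt (verit) of_nat_0_le_iff zero_le_power2)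
  have kk: "0 \<le> real k^2" by simp
  have "\<nu>*(jzeta \<zeta>^2) \<le> \<nu>*(4*zabs2 \<zeta>)" using z nu_pos by (intro mult_left_mono) auto
  moreover have "0 \<le> \<nu>*real k^2" using nu_pos by simp
  moreover have "cw1 * Q k = \<nu>*real k^2/4 + \<nu>*(jzeta \<zeta>^2)/4" unfolding cw1_def Q_def by (simp add: algebra_simps)
  ultimately show "cw1 * Q k \<le> W k" unfolding W_def by linarith
  show "W k \<ge> 1" using nu_pos z unfolding W_def by (smt (verit) mult_nonneg_nonneg of_nat_0_le_iff zero_le_power2)
  have "1 \<le> Q k" using z unfolding Q_def by (smt (verit) of_nat_0_le_iff zero_le_power2)
  moreover have "\<nu>*zabs2 \<zeta> \<le> \<nu>*(jzeta \<zeta>^2)" using z nu_pos by (intro mult_left_mono) auto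
  moreover have "cw2 * Q k = Q k + 2*(\<nu>*real k^2) + 2*(\<nu>*jzeta \<zeta>^2)" unfolding cw2_def Q_def by (simp add: algebra_simps)
  moreover have "0 \<le> \<nu>*real k^2" "0 \<le> \<nu>*zabs2 \<zeta>" using nu_pos z by auto
  ultimately show "W k \<le> cw2 * Q k" unfolding W_def by linarith
qed

end
end


lemma ws_cmp:
  assumes sf: "summable (\<lambda>k. hweight \<nu> s \<zeta> k * (cmod (f k))^2)"
    and le: "\<And>k. hweight \<nu> s' \<zeta> k * (cmod (h k))^2 \<le> B * (hweight \<nu> s \<zeta> k * (cmod (f k))^2)"
  shows "summable (\<lambda>k. hweight \<nu> s' \<zeta> k * (cmod (h k))^2)"
    "(\<Sum>k. hweight \<nu> s' \<zeta> k * (cmod (h k))^2) \<le> B * (\<Sum>k. hweight \<nu> s \<zeta> k * (cmod (f k))^2)"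
proof -
  have nn: "0 \<le> hweight \<nu> s' \<zeta> k * (cmod (h k))^2" for k by (simp add: hweight_def)
  have sB: "summable (\<lambda>k. B * (hweight \<nu> s \<zeta> k * (cmod (f k))^2))" by (rule summable_mult[OF sf])
  show s1: "summable (\<lambda>k. hweight \<nu> s' \<zeta> k * (cmod (h k))^2)"
    by (rule summable_comparison_test'[OF sB]) (use nn le in auto)
  have "(\<Sum>k. hweight \<nu> s' \<zeta> k * (cmod (h k))^2) \<le> (\<Sum>k. B * (hweight \<nu> s \<zeta> k * (cmod (f k))^2))"
    by (rule suminf_le[OF le s1 sB])
  also have "\<dots> = B * (\<Sum>k. hweight \<nu> s \<zeta> k * (cmod (f k))^2)" by (rule suminf_mult[OF sf])
  finally show "(\<Sum>k. hweight \<nu> s' \<zeta> k * (cmod (h k))^2) \<le> B * (\<Sum>k. hweight \<nu> s \<zeta> k * (cmod (f k))^2)" .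
qed

lemma ws_nonneg: "summable (\<lambda>k. hweight \<nu> s \<zeta> k * (cmod (f k))^2) \<Longrightarrow> 0 \<le> (\<Sum>k. hweight \<nu> s \<zeta> k * (cmod (f k))^2)"
  by (rule suminf_nonneg) (auto simp: hweight_def)

lemma hnorm_nonneg: "f \<in> Hs \<nu> s \<zeta> \<Longrightarrow> 0 \<le> hnorm \<nu> s \<zeta> f"
  unfolding Hs_def hnorm_def using ws_nonneg by auto

lemma hnorm_sq: "f \<in> Hs \<nu> s \<zeta> \<Longrightarrow> (hnorm \<nu> s \<zeta> f)^2 = (\<Sum>k. hweight \<nu> s \<zeta> k * (cmod (f k))^2)"
  unfolding Hs_def hnorm_def using ws_nonneg by auto

lemma hn_cmp:
  assumes f: "f \<in> Hs \<nu> s \<zeta>" and h0: "h 0 = 0" and B: "B \<ge> 0"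
    and le: "\<And>k. hweight \<nu> s' \<zeta> k * (cmod (h k))^2 \<le> B^2 * (hweight \<nu> s \<zeta> k * (cmod (f k))^2)"
  shows "h \<in> Hs \<nu> s' \<zeta>" "hnorm \<nu> s' \<zeta> h \<le> B * hnorm \<nu> s \<zeta> f"
proof -
  have sf: "summable (\<lambda>k. hweight \<nu> s \<zeta> k * (cmod (f k))^2)" using f by (simp add: Hs_def)
  note r = ws_cmp[OF sf le]
  show "h \<in> Hs \<nu> s' \<zeta>" using r(1) h0 by (simp add: Hs_def)
  have "hnorm \<nu> s' \<zeta> h \<le> sqrt (B^2 * (\<Sum>k. hweight \<nu> s \<zeta> k * (cmod (f k))^2))"
    unfolding hnorm_def using r(2) by (rule real_sqrt_le_mono)
  also have "\<dots> = B * hnorm \<nu> s \<zeta> f" using B by (simp add: hnorm_def real_sqrt_mult)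
  finally show "hnorm \<nu> s' \<zeta> h \<le> B * hnorm \<nu> s \<zeta> f" .
qed

lemma sqrt2_mono: fixes x1 x2 y1 y2 B :: real
  assumes "0 \<le> x1" "x1 \<le> B*y1" "0 \<le> x2" "x2 \<le> B*y2" "0 \<le> B"
  shows "sqrt (x1^2 + x2^2) \<le> B * sqrt (y1^2 + y2^2)"
proof -
  have "x1^2 \<le> (B*y1)^2" "x2^2 \<le> (B*y2)^2" using assms by (auto intro!: power_mono)
  hence "x1^2 + x2^2 \<le> B^2 * (y1^2 + y2^2)" by (simp add: power_mult_distrib algebra_simps)
  hence "sqrt (x1^2 + x2^2) \<le> sqrt (B^2 * (y1^2 + y2^2))" by (rule real_sqrt_le_mono)
  thus ?thesis using assms by (simp add: real_sqrt_mult)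
qed

lemma shift_cmp:
  fixes t m :: "nat \<Rightarrow> real"
  assumes "\<And>k. 0 \<le> t k" "t 0 = 0" "summable m" "\<And>j. t (Suc j) \<le> K * m j"
  shows "summable t" "suminf t \<le> K * suminf m"
proof -
  have sK: "summable (\<lambda>j. K * m j)" by (rule summable_mult[OF assms(3)])
  have s1: "summable (\<lambda>j. t (Suc j))"
    by (rule summable_comparison_test'[OF sK]) (use assms in auto)
  thus st: "summable t" by (simp add: summable_Suc_iff)
  have "suminf t = (\<Sum>j. t (Suc j))" using suminf_split_head[OF st] assms(2) by simp
  also have "\<dots> \<le> (\<Sum>j. K * m j)" by (rule suminf_le[OF assms(4) s1 sK])
  also have "\<dots> = K * suminf m" by (rule suminf_mult[OF assms(3)])
  finally show "suminf t \<le> K * suminf m" .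
qed

definition mterm :: "real \<Rightarrow> complex \<Rightarrow> int \<times> int \<Rightarrow> nat \<Rightarrow> real" where
  "mterm s lam \<zeta> j = 1 / (real (Suc j) ^ 2 * (real (Suc j) ^ 4 + (jomega2 lam \<zeta>)^2)
                           * (real (Suc j) ^ 2 + (jzeta \<zeta>)^2) powr s)"

lemma Mfun_eq: "Mfun s lam \<zeta> = sqrt (suminf (mterm s lam \<zeta>))"
  by (simp add: Mfun_def mterm_def[abs_def])

lemma mterm_nonneg: "0 \<le> mterm s lam \<zeta> j" by (simp add: mterm_def)

lemma mterm_summable: assumes "s > -5/2" shows "summable (mterm s lam \<zeta>)"
proof -
  define A where "A = jzeta \<zeta>^2"
  define p where "p = -2 * s - 6"
  have A0: "A \<ge> 0" by (simp add: A_def)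
  have p: "p < -1" using assms by (simp add: p_def)
  have sp: "summable (\<lambda>j. real (Suc j) powr p)"
    using summable_real_powr_iff[of p] p summable_Suc_iff[of "\<lambda>n. real n powr p"] by simp
  have sp2: "summable (\<lambda>j. (1+A) powr (abs s) * real (Suc j) powr p)" by (rule summable_mult[OF sp])
  show ?thesis
  proof (rule summable_comparison_test'[OF sp2])
    fix j :: nat
    define K where "K = real (Suc j)"
    have K1: "K \<ge> 1" by (simp add: K_def)
    have "K^2 \<ge> 1" using K1 by (simp add: one_le_power)
    hence "K^2 + A > 0" using A0 by linarith
    hence Qp: "(K^2 + A) powr s > 0" by simp
    have "mterm s lam \<zeta> j = 1 / (K^2 * (K^4 + (jomega2 lam \<zeta>)^2) * (K^2 + A) powr s)"
      by (simp add: mterm_def K_def A_def)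
    also have "\<dots> \<le> 1 / (K^6 * (K^2 + A) powr s)"
    proof -
      have "K^6 \<le> K^2 * (K^4 + (jomega2 lam \<zeta>)^2)" using K1 by (simp add: algebra_simps power_add[symmetric] flip: numeral_plus_numeral)
      hence "K^6 * (K^2 + A) powr s \<le> K^2 * (K^4 + (jomega2 lam \<zeta>)^2) * (K^2 + A) powr s"
        using Qp by (intro mult_right_mono) auto
      moreover have "0 < K^6 * (K^2 + A) powr s" using K1 Qp by simp
      ultimately show ?thesis by (intro divide_left_mono) auto
    qed
    also have "\<dots> = (K^2 + A) powr (-s) / K^6" using Qp by (simp add: powr_minus divide_simps)
    also have "\<dots> \<le> ((1+A) powr (abs (-s)) * K powr (2*(-s))) / K^6"
      using Qpow[OF K1 A0, of "-s"] K1 by (intro divide_right_mono) auto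
    also have "\<dots> = (1+A) powr (abs s) * K powr p"
    proof -
      have e6: "K^6 = K powr 6" using K1 by (simp add: powr_numeral)
      have F: "K powr (2*(-s)) / K powr 6 = K powr p"
      proof -
        have "p = 2*(-s) - 6" by (simp add: p_def)
        thus ?thesis using K1 by (simp only: powr_diff)
      qed
      have "(1+A) powr (abs (-s)) * K powr (2*(-s)) / K^6 = (1+A) powr (abs s) * (K powr (2*(-s)) / K powr 6)"
        by (simp only: e6 times_divide_eq_right abs_minus_cancel)
      also have "\<dots> = (1+A) powr (abs s) * K powr p" by (simp only: F)
      finally show ?thesis .
    qed
    finally show "norm (mterm s lam \<zeta> j) \<le> (1+A) powr (abs s) * real (Suc j) powr p"
      using mterm_nonneg[of s lam \<zeta> j] by (simp add: K_def)
  qed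
qed

context setting begin

definition "Kc = 2 * sqrt (2/a) * a / pi"
definition "KE s = max (cw1 powr s) (cw2 powr s) * Kc^2 / kS^2"

lemma Kc_pos: "Kc > 0" using a_pos by (simp add: Kc_def)

lemma oc0: "onecoef a 0 = 0" by (simp add: onecoef_def)
lemma oc1: "onecoef a 1 = Kc" by (simp add: onecoef_def Kc_def)

lemma oc_bound: "(onecoef a k)^2 * real k^2 \<le> Kc^2"
proof (cases "k = 0")
  case True thus ?thesis using Kc_pos by (simp add: onecoef_def)
next
  case False
  have e: "\<bar>1 - (-1::real)^k\<bar> \<le> 2" by (cases "even k") auto
  have "\<bar>onecoef a k\<bar> * real k = sqrt (2/a) * a * \<bar>1 - (-1)^k\<bar> / pi"
    using False a_pos by (simp add: onecoef_def abs_mult)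
  also have "\<dots> \<le> sqrt (2/a) * a * 2 / pi"
    using e a_pos by (intro divide_right_mono mult_left_mono) auto
  also have "\<dots> = Kc" by (simp add: Kc_def)
  finally have "(\<bar>onecoef a k\<bar> * real k)^2 \<le> Kc^2" by (intro power_mono) auto
  thus ?thesis by (simp add: power_mult_distrib)
qed

end


lemma cs2: fixes a b c d :: real shows "a*b + c*d \<le> sqrt (a^2 + c^2) * sqrt (b^2 + d^2)"
proof -
  have "(a^2 + c^2)*(b^2 + d^2) - (a*b + c*d)^2 = (a*d - c*b)^2" by (simp add: power2_eq_square algebra_simps)
  hence "(a*b + c*d)^2 \<le> (a^2 + c^2)*(b^2 + d^2)" by (smt (verit) zero_le_power2)
  hence "a*b + c*d \<le> sqrt ((a^2 + c^2)*(b^2 + d^2))" by (rule real_le_rsqrt)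
  thus ?thesis by (simp add: real_sqrt_mult)
qed


lemma cmod_add_sq: "(cmod (x + y))^2 \<le> 2*(cmod x)^2 + 2*(cmod y)^2"
proof -
  have "cmod (x+y) \<le> cmod x + cmod y" by (rule norm_triangle_ineq)
  hence "(cmod (x+y))^2 \<le> (cmod x + cmod y)^2" by (intro power_mono) auto
  also have "\<dots> \<le> 2*(cmod x)^2 + 2*(cmod y)^2"
  proof -
    have "2*(cmod x)^2 + 2*(cmod y)^2 - (cmod x + cmod y)^2 = (cmod x - cmod y)^2"
      by (simp add: power2_eq_square algebra_simps)
    thus ?thesis using zero_le_power2[of "cmod x - cmod y"] by linarith
  qed
  finally show ?thesis .
qed

lemma ws_cmp2:
  fixes x y :: "nat \<Rightarrow> real"
  assumes sx: "summable x" and sy: "summable y"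
    and le: "\<And>k. hweight \<nu> s \<zeta> k * (cmod (h k))^2 \<le> B1 * x k + B2 * y k"
  shows "summable (\<lambda>k. hweight \<nu> s \<zeta> k * (cmod (h k))^2)"
    "(\<Sum>k. hweight \<nu> s \<zeta> k * (cmod (h k))^2) \<le> B1 * suminf x + B2 * suminf y"
proof -
  have nn: "0 \<le> hweight \<nu> s \<zeta> k * (cmod (h k))^2" for k by (simp add: hweight_def)
  have sB: "summable (\<lambda>k. B1 * x k + B2 * y k)" by (intro summable_add summable_mult sx sy)
  show s1: "summable (\<lambda>k. hweight \<nu> s \<zeta> k * (cmod (h k))^2)"
    by (rule summable_comparison_test'[OF sB]) (use nn le in auto)
  have "(\<Sum>k. hweight \<nu> s \<zeta> k * (cmod (h k))^2) \<le> (\<Sum>k. B1 * x k + B2 * y k)"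
    by (rule suminf_le[OF le s1 sB])
  also have "\<dots> = B1 * suminf x + B2 * suminf y"
    using suminf_add[OF summable_mult[OF sx] summable_mult[OF sy]] suminf_mult[OF sx] suminf_mult[OF sy] by simp
  finally show "(\<Sum>k. hweight \<nu> s \<zeta> k * (cmod (h k))^2) \<le> B1 * suminf x + B2 * suminf y" .
qed

lemma Hs_add: assumes "f \<in> Hs \<nu> s \<zeta>" "g \<in> Hs \<nu> s \<zeta>" shows "(\<lambda>k. f k + g k) \<in> Hs \<nu> s \<zeta>"
proof -
  have "summable (\<lambda>k. hweight \<nu> s \<zeta> k * (cmod (f k + g k))^2)"
  proof (rule ws_cmp2(1))
    show "summable (\<lambda>k. hweight \<nu> s \<zeta> k * (cmod (f k))^2)" "summable (\<lambda>k. hweight \<nu> s \<zeta> k * (cmod (g k))^2)"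
      using assms by (auto simp: Hs_def)
    fix k show "hweight \<nu> s \<zeta> k * (cmod (f k + g k))^2 \<le> 2 * (hweight \<nu> s \<zeta> k * (cmod (f k))^2) + 2 * (hweight \<nu> s \<zeta> k * (cmod (g k))^2)"
      using mult_left_mono[OF cmod_add_sq[of "f k" "g k"], of "hweight \<nu> s \<zeta> k"] by (simp add: hweight_def algebra_simps)
  qed
  thus ?thesis using assms by (simp add: Hs_def)
qed

lemma Hs_scale: assumes "f \<in> Hs \<nu> s \<zeta>"
  shows "(\<lambda>k. c * f k) \<in> Hs \<nu> s \<zeta>" "hnorm \<nu> s \<zeta> (\<lambda>k. c * f k) = cmod c * hnorm \<nu> s \<zeta> f"
proof -
  have sf: "summable (\<lambda>k. hweight \<nu> s \<zeta> k * (cmod (f k))^2)" using assms by (simp add: Hs_def)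
  have e: "(\<lambda>k. hweight \<nu> s \<zeta> k * (cmod (c * f k))^2) = (\<lambda>k. (cmod c)^2 * (hweight \<nu> s \<zeta> k * (cmod (f k))^2))"
    by (simp add: norm_mult power_mult_distrib mult_ac)
  show "(\<lambda>k. c * f k) \<in> Hs \<nu> s \<zeta>" using assms summable_mult[OF sf, of "(cmod c)^2"] by (simp add: Hs_def e)
  show "hnorm \<nu> s \<zeta> (\<lambda>k. c * f k) = cmod c * hnorm \<nu> s \<zeta> f"
    unfolding hnorm_def e suminf_mult[OF sf] by (simp add: real_sqrt_mult)
qed

lemma Hs_diff: assumes "f \<in> Hs \<nu> s \<zeta>" "g \<in> Hs \<nu> s \<zeta>" shows "(\<lambda>k. f k - g k) \<in> Hs \<nu> s \<zeta>"
  using Hs_add[OF assms(1) Hs_scale(1)[OF assms(2), of "-1"]] by simp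

lemma Mfun_nonneg: "s > -5/2 \<Longrightarrow> 0 \<le> Mfun s lam \<zeta>"
  unfolding Mfun_eq by (simp add: suminf_nonneg mterm_summable mterm_nonneg)

context setting begin

definition "\<epsilon>c = 1/(2*\<delta>1)"
definition "\<kappa>c = 1/(2*(\<delta>1+1))"
definition "\<kappa>g = Kc^2 * \<kappa>c / (2 * KS * (\<epsilon>c + 1))"
definition "Ca = sqrt (KE (-\<sigma>)) / \<kappa>g"
definition "Cb = Ca * (sqrt (KE \<sigma>) + sqrt (KE (\<sigma>+2)))"
definition "Cc2 = (1 + cw2) / kS"
definition "Cfin = Ca + Cb + Cc2"


context
  fixes lam :: complex and \<zeta> :: "int \<times> int"
  assumes lamS: "lam \<in> Sset \<delta>1 \<delta>2" and zne: "\<zeta> \<noteq> (0,0)"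
begin

abbreviation "sy k \<equiv> symb a \<nu> lam \<zeta> k"
abbreviation "cc k \<equiv> complex_of_real (onecoef a k)"
abbreviation "Om \<equiv> jomega2 lam \<zeta>"
abbreviation "gg \<equiv> (\<Sum>k. cc k * cc k / sy k)"

lemmas sl = symb_lower[OF lamS zne] and su = symb_upper[OF lamS zne] and snz = symb_nz[OF lamS zne]
  and Wb = W_bounds[OF lamS zne] and hwe = hweight_eq[OF lamS zne] and Omp = Om_props[OF lamS zne]
  and Pp = P_pos[OF lamS zne]

lemma syP: "kS * (real k^2 + Om) \<le> cmod (sy k)" "cmod (sy k) > 0" "Om \<le> real k^2 + Om"
  "Q \<zeta> k \<le> real k^2 + Om"
proof -
  show "kS * (real k^2 + Om) \<le> cmod (sy k)" by (rule sl)
  show "cmod (sy k) > 0" using snz by simp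
  show "Om \<le> real k^2 + Om" by simp
  show "Q \<zeta> k \<le> real k^2 + Om" using Omp unfolding Q_def[OF lamS zne] by simp
qed

lemma lemE: "hweight \<nu> s \<zeta> (Suc j) * (cmod (cc (Suc j) / sy (Suc j)))^2 \<le> KE s * mterm (-s) lam \<zeta> j"
proof -
  define k where "k = Suc j"
  define K where "K = real k"
  define Mx where "Mx = max (cw1 powr s) (cw2 powr s)"
  have K1: "K \<ge> 1" by (simp add: K_def k_def)
  have Qk: "Q \<zeta> k = K^2 + jzeta \<zeta>^2" by (simp add: Q_def[OF lamS zne] K_def)
  have Q0: "Q \<zeta> k \<ge> 1" using Wb by simp
  have hw: "hweight \<nu> s \<zeta> k \<le> Mx * Q \<zeta> k powr s"
    unfolding hwe Mx_def by (rule powr_cmp) (use Wb(1,2)[of k] Wb(3)[of k] consts_pos in auto)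
  have oc: "(onecoef a k)^2 \<le> Kc^2 / K^2"
    using oc_bound[of k] K1 by (simp add: K_def pos_le_divide_eq)
  have P: "kS * (K^2 + Om) \<le> cmod (sy k)" using syP(1)[of k] by (simp add: K_def)
  have sy2: "kS^2 * (K^4 + Om^2) \<le> (cmod (sy k))^2"
  proof -
    have e: "(K^2 + Om)^2 = K^4 + Om^2 + 2*(K^2*Om)" by (simp add: power2_eq_square power4_eq_xxxx algebra_simps)
    have "0 \<le> K^2*Om" using Omp by simp
    hence "K^4 + Om^2 \<le> (K^2 + Om)^2" using e by linarith
    hence "kS^2 * (K^4 + Om^2) \<le> kS^2 * (K^2 + Om)^2" by (intro mult_left_mono) auto
    also have "\<dots> = (kS * (K^2 + Om))^2" by (simp add: power_mult_distrib)
    also have "\<dots> \<le> (cmod (sy k))^2" using P consts_pos K1 Omp by (intro power_mono) auto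
    finally show ?thesis .
  qed
  have pos: "0 < kS^2 * (K^4 + Om^2)" using consts_pos K1 by (intro mult_pos_pos) (auto intro: add_pos_nonneg)
  have sy3: "1 / (cmod (sy k))^2 \<le> 1 / (kS^2 * (K^4 + Om^2))"
    by (rule divide_left_mono[OF sy2]) (use pos syP(2)[of k] in auto)
  have "(cmod (cc k / sy k))^2 = (onecoef a k)^2 * (1 / (cmod (sy k))^2)"
    by (simp add: norm_divide power_divide)
  hence "hweight \<nu> s \<zeta> k * (cmod (cc k / sy k))^2 = hweight \<nu> s \<zeta> k * ((onecoef a k)^2 * (1 / (cmod (sy k))^2))"
    by simp
  also have "\<dots> \<le> (Mx * Q \<zeta> k powr s) * ((Kc^2 / K^2) * (1 / (kS^2 * (K^4 + Om^2))))"
    by (intro mult_mono hw oc sy3) (auto simp: hweight_def Mx_def le_max_iff_disj intro!: mult_nonneg_nonneg)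
  also have "\<dots> = KE s * mterm (-s) lam \<zeta> j"
  proof -
    have Qp: "Q \<zeta> k powr s > 0" using Q0 by simp
    have X: "K^4 + Om^2 > 0" using K1 by (intro add_pos_nonneg) auto
    have mt: "mterm (-s) lam \<zeta> j = Q \<zeta> k powr s / (K^2 * (K^4 + Om^2))"
    proof -
      have "mterm (-s) lam \<zeta> j = 1 / (K^2 * (K^4 + Om^2) * inverse (Q \<zeta> k powr s))"
        unfolding mterm_def Q_def[OF lamS zne] K_def k_def by (simp add: powr_minus)
      also have "\<dots> = Q \<zeta> k powr s / (K^2 * (K^4 + Om^2))" using Qp by (simp add: field_simps)
      finally show ?thesis .
    qed
    have gen: "\<And>M q C K2 k2 X :: real. K2 \<noteq> 0 \<Longrightarrow> k2 \<noteq> 0 \<Longrightarrow> X \<noteq> 0 \<Longrightarrow>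
       M * q * (C / K2 * (1 / (k2 * X))) = (M * C / k2) * (q / (K2 * X))" by (simp add: field_simps)
    show ?thesis unfolding mt KE_def Mx_def[symmetric] by (rule gen) (use K1 X consts_pos in auto)
  qed
  finally show ?thesis by (simp add: k_def)
qed

lemma multA: "Om^2 * (hweight \<nu> s \<zeta> k * (cmod (f / sy k))^2) \<le> (1/kS)^2 * (hweight \<nu> s \<zeta> k * (cmod f)^2)"
proof -
  have sp: "cmod (sy k) > 0" by (rule syP(2))
  have "kS * Om \<le> cmod (sy k)" using syP(1)[of k] consts_pos by (smt (verit) mult_left_mono zero_le_power2 of_nat_0_le_iff)
  hence r: "Om / cmod (sy k) \<le> 1/kS" using sp consts_pos by (simp add: field_simps)
  have "(Om / cmod (sy k))^2 \<le> (1/kS)^2" using r Omp sp by (intro power_mono) auto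
  hence "hweight \<nu> s \<zeta> k * (cmod f)^2 * (Om / cmod (sy k))^2 \<le> hweight \<nu> s \<zeta> k * (cmod f)^2 * (1/kS)^2"
    by (intro mult_left_mono) (auto simp: hweight_def)
  thus ?thesis by (simp add: norm_divide power_divide field_simps)
qed

lemma multB: "hweight \<nu> (s+2) \<zeta> k * (cmod (f / sy k))^2 \<le> (cw2/kS)^2 * (hweight \<nu> s \<zeta> k * (cmod f)^2)"
proof -
  have sp: "cmod (sy k) > 0" by (rule syP(2))
  have W1: "W \<zeta> k \<ge> 1" using Wb by simp
  have hw2: "hweight \<nu> (s+2) \<zeta> k = hweight \<nu> s \<zeta> k * (W \<zeta> k)^2"
    using W1 by (simp add: hwe powr_add powr_numeral)
  have "W \<zeta> k \<le> cw2 * (real k^2 + Om)"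
    using Wb(2)[of k] syP(4)[of k] consts_pos by (smt (verit) mult_left_mono)
  moreover have "cw2 * (kS * (real k^2 + Om)) \<le> cw2 * cmod (sy k)" using syP(1)[of k] consts_pos by simp
  ultimately have "kS * W \<zeta> k \<le> cw2 * cmod (sy k)" using consts_pos
    by (smt (verit, ccfv_threshold) mult.left_commute mult_left_mono)
  hence r: "W \<zeta> k / cmod (sy k) \<le> cw2/kS" using sp consts_pos by (simp add: field_simps)
  have "(W \<zeta> k / cmod (sy k))^2 \<le> (cw2/kS)^2" using r W1 sp by (intro power_mono) auto
  hence "hweight \<nu> s \<zeta> k * (cmod f)^2 * (W \<zeta> k / cmod (sy k))^2 \<le> hweight \<nu> s \<zeta> k * (cmod f)^2 * (cw2/kS)^2"
    by (intro mult_left_mono) (auto simp: hweight_def)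
  thus ?thesis unfolding hw2 by (simp add: norm_divide power_divide field_simps)
qed

lemma multC: "hweight \<nu> s \<zeta> k * (cmod (sy k * h))^2 \<le> (KS * Om / cw1)^2 * (hweight \<nu> (s+2) \<zeta> k * (cmod h)^2)"
proof -
  have W1: "W \<zeta> k \<ge> 1" using Wb by simp
  have hw2: "hweight \<nu> (s+2) \<zeta> k = hweight \<nu> s \<zeta> k * (W \<zeta> k)^2"
    using W1 by (simp add: hwe powr_add powr_numeral)
  have "real k^2 + Om \<le> Om * Q \<zeta> k"
  proof -
    have "real k^2 \<le> Om * real k^2" using Omp by (simp add: mult_le_cancel_right1)
    moreover have "Om \<le> Om * jzeta \<zeta>^2" using Omp jz_props[OF lamS zne] by (simp add: mult_le_cancel_left1)
    ultimately show ?thesis unfolding Q_def[OF lamS zne] by (simp add: algebra_simps)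
  qed
  moreover have "Om * Q \<zeta> k \<le> Om * (W \<zeta> k / cw1)"
    using Wb(1)[of k] Omp consts_pos by (intro mult_left_mono) (auto simp: field_simps)
  ultimately have "cmod (sy k) \<le> KS * (Om * (W \<zeta> k / cw1))" using su[of k] consts_pos
    by (smt (verit, best) mult_left_mono)
  hence r: "cmod (sy k) / W \<zeta> k \<le> KS * Om / cw1" using W1 consts_pos by (simp add: field_simps)
  have "(cmod (sy k) / W \<zeta> k)^2 \<le> (KS * Om / cw1)^2" using r W1 by (intro power_mono) auto
  hence "hweight \<nu> s \<zeta> k * (W \<zeta> k)^2 * (cmod h)^2 * (cmod (sy k) / W \<zeta> k)^2 \<le> hweight \<nu> s \<zeta> k * (W \<zeta> k)^2 * (cmod h)^2 * (KS * Om / cw1)^2"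
    by (intro mult_left_mono) (auto simp: hweight_def)
  thus ?thesis unfolding hw2 using W1 by (simp add: norm_mult power_mult_distrib field_simps)
qed

lemma cs_Hs: assumes "s < 5/2"
  shows "(\<lambda>k. cc k / sy k) \<in> Hs \<nu> s \<zeta>"
    "(\<Sum>k. hweight \<nu> s \<zeta> k * (cmod (cc k / sy k))^2) \<le> KE s * suminf (mterm (-s) lam \<zeta>)"
proof -
  have ms: "summable (mterm (-s) lam \<zeta>)" by (rule mterm_summable) (use assms in simp)
  note r = shift_cmp[of "\<lambda>k. hweight \<nu> s \<zeta> k * (cmod (cc k / sy k))^2", OF _ _ ms lemE]
  have h: "summable (\<lambda>k. hweight \<nu> s \<zeta> k * (cmod (cc k / sy k))^2)"
    "(\<Sum>k. hweight \<nu> s \<zeta> k * (cmod (cc k / sy k))^2) \<le> KE s * suminf (mterm (-s) lam \<zeta>)"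
    by (rule r; simp add: hweight_def oc0)+
  thus "(\<lambda>k. cc k / sy k) \<in> Hs \<nu> s \<zeta>" by (simp add: Hs_def oc0)
  show "(\<Sum>k. hweight \<nu> s \<zeta> k * (cmod (cc k / sy k))^2) \<le> KE s * suminf (mterm (-s) lam \<zeta>)" by (fact h(2))
qed

lemma c_Hs: "(\<lambda>k. cc k) \<in> Hs \<nu> \<sigma> \<zeta>"
proof -
  have m: "(\<lambda>k. cc k / sy k) \<in> Hs \<nu> (\<sigma>+2) \<zeta>" by (rule cs_Hs) (use sig_hi in simp)
  show ?thesis
  proof (rule hn_cmp(1)[OF m, of _ "KS * Om / cw1"])
    show "cc 0 = 0" by (simp add: oc0)
    show "0 \<le> KS * Om / cw1" using consts_pos Omp by simp
    fix k
    have "cc k = sy k * (cc k / sy k)" using snz by simp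
    thus "hweight \<nu> \<sigma> \<zeta> k * (cmod (cc k))^2 \<le> (KS * Om / cw1)^2 * (hweight \<nu> (\<sigma>+2) \<zeta> k * (cmod (cc k / sy k))^2)"
      using multC[of \<sigma> k "cc k / sy k"] by simp
  qed
qed

lemma sy_ge: "kS \<le> cmod (sy k)"
proof -
  have "kS * 1 \<le> kS * (real k^2 + Om)" using Pp[of k] consts_pos by (intro mult_left_mono) auto
  thus ?thesis using sl[of k] by simp
qed

lemma g_summable: "summable (\<lambda>k. cc k * cc k / sy k)"
proof -
  have sp: "summable (\<lambda>k. (Kc^2/kS) * real k powr (-2))"
    by (rule summable_mult) (simp add: summable_real_powr_iff)
  show ?thesis
  proof (rule summable_comparison_test'[OF sp])
    fix k :: nat
    show "norm (cc k * cc k / sy k) \<le> (Kc^2/kS) * real k powr (-2)"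
    proof (cases "k = 0")
      case True thus ?thesis by (simp add: oc0)
    next
      case False
      have kp: "real k > 0" using False by simp
      have o: "(onecoef a k)^2 \<le> Kc^2 * real k powr (-2)"
        using oc_bound[of k] kp by (simp add: powr_minus powr_realpow divide_simps)
      have "norm (cc k * cc k / sy k) = (onecoef a k)^2 / cmod (sy k)"
        by (simp add: norm_mult norm_divide power2_eq_square)
      also have "\<dots> \<le> (onecoef a k)^2 / kS" using sy_ge[of k] consts_pos syP(2)[of k] by (intro divide_left_mono) auto
      also have "\<dots> \<le> (Kc^2 * real k powr (-2)) / kS" using o consts_pos by (intro divide_right_mono) auto
      finally show ?thesis by simp
    qed
  qed
qed

definition "sg = (if Im lam \<ge> 0 then 1 else -1::real)"

lemma cone: "\<kappa>c * cmod (sy k) \<le> \<epsilon>c * Re (sy k) + sg * Im (sy k)"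
proof -
  obtain \<mu>1 \<mu>2 where lam: "lam = Complex (-\<delta>2-\<mu>1) \<mu>2" and h: "\<bar>\<mu>2\<bar> \<ge> \<mu>1/\<delta>1"
    using lamS unfolding Sset_def by auto
  have h': "\<mu>1 \<le> \<delta>1*\<bar>\<mu>2\<bar>" using h d1pos by (simp add: pos_divide_le_eq mult.commute)
  have T: "2*\<delta>2 \<le> T \<zeta> k" by (rule T_bounds(1)[OF lamS zne])
  have Re: "Re (sy k) = T \<zeta> k - \<delta>2 - \<mu>1" and Im: "Im (sy k) = \<mu>2"
    unfolding symb_eq[OF lamS zne] by (simp_all add: lam)
  have Il: "Im lam = \<mu>2" by (simp add: lam)
  have sgI: "sg * Im (sy k) = \<bar>\<mu>2\<bar>" unfolding Im sg_def using Il by simp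
  have cm: "cmod (sy k) \<le> \<bar>Re (sy k)\<bar> + \<bar>\<mu>2\<bar>" using cmod_le[of "sy k"] Im by simp
  have kc: "\<kappa>c \<le> \<epsilon>c" "\<kappa>c \<le> 1" "\<kappa>c > 0" "\<epsilon>c > 0" using d1pos by (auto simp: \<kappa>c_def \<epsilon>c_def field_simps)
  show ?thesis
  proof (cases "Re (sy k) \<ge> 0")
    case True
    have "\<kappa>c * cmod (sy k) \<le> \<kappa>c * (Re (sy k) + \<bar>\<mu>2\<bar>)" using cm True kc by (intro mult_left_mono) auto
    also have "\<dots> \<le> \<epsilon>c * Re (sy k) + \<bar>\<mu>2\<bar>"
      using kc True mult_right_mono[of \<kappa>c \<epsilon>c "Re (sy k)"] mult_right_mono[of \<kappa>c 1 "\<bar>\<mu>2\<bar>"]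
      by (simp add: algebra_simps)
    finally show ?thesis using sgI by simp
  next
    case False
    have "- Re (sy k) \<le> \<delta>1*\<bar>\<mu>2\<bar>" using False Re T h' d2pos by linarith
    hence "\<epsilon>c * (- Re (sy k)) \<le> \<epsilon>c * (\<delta>1*\<bar>\<mu>2\<bar>)" using kc by (intro mult_left_mono) auto
    also have "\<epsilon>c * (\<delta>1*\<bar>\<mu>2\<bar>) = \<bar>\<mu>2\<bar>/2" using d1pos by (simp add: \<epsilon>c_def)
    finally have A: "\<bar>\<mu>2\<bar>/2 \<le> \<epsilon>c * Re (sy k) + \<bar>\<mu>2\<bar>" by simp
    have "cmod (sy k) \<le> (\<delta>1+1)*\<bar>\<mu>2\<bar>" using cm False \<open>- Re (sy k) \<le> \<delta>1*\<bar>\<mu>2\<bar>\<close> by (simp add: algebra_simps)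
    hence "\<kappa>c * cmod (sy k) \<le> \<kappa>c * ((\<delta>1+1)*\<bar>\<mu>2\<bar>)" using kc by (intro mult_left_mono) auto
    also have "\<kappa>c * ((\<delta>1+1)*\<bar>\<mu>2\<bar>) = \<bar>\<mu>2\<bar>/2"
    proof -
      have "\<kappa>c * (\<delta>1+1) = 1/2" using d1pos by (simp add: \<kappa>c_def)
      thus ?thesis by (metis mult.assoc times_divide_eq_left mult_1)
    qed
    finally show ?thesis using A sgI by simp
  qed
qed

lemma g_lower: "\<kappa>g / Om \<le> cmod gg"
proof -
  define d where "d = Complex \<epsilon>c sg"
  have ep: "\<epsilon>c > 0" using d1pos by (simp add: \<epsilon>c_def)
  have sg1: "\<bar>sg\<bar> = 1" by (simp add: sg_def)
  have cd: "cmod d \<le> \<epsilon>c + 1" using cmod_le[of d] ep sg1 by (simp add: d_def)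
  have Rd: "Re (d * (cc k * cc k / sy k)) = (onecoef a k)^2 * ((\<epsilon>c * Re (sy k) + sg * Im (sy k)) / (cmod (sy k))^2)" for k
  proof -
    have "d * (cc k * cc k / sy k) = complex_of_real ((onecoef a k)^2) * (d / sy k)"
      by (simp add: power2_eq_square)
    thus ?thesis by (simp add: Re_divide' d_def power2_eq_square algebra_simps)
  qed
  have tl: "(onecoef a k)^2 * (\<kappa>c / cmod (sy k)) \<le> Re (d * (cc k * cc k / sy k))" for k
  proof -
    have sp: "cmod (sy k) > 0" by (rule syP(2))
    have "\<kappa>c / cmod (sy k) = (\<kappa>c * cmod (sy k)) / (cmod (sy k))^2" using sp by (simp add: power2_eq_square)
    also have "\<dots> \<le> (\<epsilon>c * Re (sy k) + sg * Im (sy k)) / (cmod (sy k))^2"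
      using cone[of k] sp by (intro divide_right_mono) auto
    finally show ?thesis unfolding Rd by (intro mult_left_mono) auto
  qed
  have kcp: "\<kappa>c > 0" using d1pos by (simp add: \<kappa>c_def)
  have nn: "0 \<le> Re (d * (cc k * cc k / sy k))" for k
    using tl[of k] kcp syP(2)[of k] by (smt (verit) divide_nonneg_pos mult_nonneg_nonneg zero_le_power2)
  have gs: "summable (\<lambda>k. d * (cc k * cc k / sy k))" by (rule summable_mult[OF g_summable])
  have rs: "summable (\<lambda>k. Re (d * (cc k * cc k / sy k)))" by (rule summable_Re[OF gs])
  have eq: "Re (d * gg) = (\<Sum>k. Re (d * (cc k * cc k / sy k)))"
    using suminf_mult[OF g_summable, of d] Re_suminf[OF gs] by simp
  have "Kc^2 * (\<kappa>c / cmod (sy 1)) \<le> Re (d * (cc 1 * cc 1 / sy 1))" using tl[of 1] by (simp add: oc1[unfolded One_nat_def])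
  also have "\<dots> = sum (\<lambda>k. Re (d * (cc k * cc k / sy k))) {1}" by simp
  also have "\<dots> \<le> Re (d * gg)" unfolding eq by (rule sum_le_suminf[OF rs]) (use nn in auto)
  also have "\<dots> \<le> cmod (d * gg)" by (rule complex_Re_le_cmod)
  also have "\<dots> \<le> (\<epsilon>c + 1) * cmod gg" unfolding norm_mult by (rule mult_right_mono[OF cd]) simp
  finally have A: "Kc^2 * (\<kappa>c / cmod (sy 1)) \<le> (\<epsilon>c + 1) * cmod gg" .
  have s1: "cmod (sy 1) \<le> KS * (2 * Om)" using su[of 1] Omp consts_pos by (smt (verit) mult_left_mono of_nat_1 power_one)
  have s1p: "cmod (sy 1) > 0" by (rule syP(2))
  have "Kc^2 * (\<kappa>c / (KS * (2 * Om))) \<le> Kc^2 * (\<kappa>c / cmod (sy 1))"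
    using s1 s1p kcp Omp(2) consts_pos by (intro mult_left_mono divide_left_mono) auto
  with A have "Kc^2 * (\<kappa>c / (KS * (2 * Om))) \<le> (\<epsilon>c + 1) * cmod gg" by linarith
  hence "Kc^2 * (\<kappa>c / (KS * (2 * Om))) / (\<epsilon>c + 1) \<le> cmod gg"
    using ep by (subst pos_divide_le_eq) (auto simp: mult.commute)
  moreover have "Kc^2 * (\<kappa>c / (KS * (2 * Om))) / (\<epsilon>c + 1) = \<kappa>g / Om" by (simp add: \<kappa>g_def field_simps)
  ultimately show ?thesis by simp
qed


abbreviation "NN f1 f2 \<equiv> (\<Sum>k. cc k * (of_int (fst \<zeta>) * f1 k + of_int (snd \<zeta>) * f2 k) / sy k)"

lemma zabs_eq: "zabs \<zeta> = sqrt ((real_of_int (fst \<zeta>))^2 + (real_of_int (snd \<zeta>))^2)"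
  by (simp add: zabs_def zabs2_def)

lemma hw_inv: "hweight \<nu> (-s) \<zeta> k = 1 / hweight \<nu> s \<zeta> k"
  by (simp add: hweight_def powr_minus divide_inverse)

lemma hw_pos: "hweight \<nu> s \<zeta> k > 0"
  using Wb(4)[of k] by (simp add: hwe)

lemma N_bound:
  assumes f1: "f1 \<in> Hs \<nu> \<sigma> \<zeta>" and f2: "f2 \<in> Hs \<nu> \<sigma> \<zeta>"
  shows "summable (\<lambda>k. cc k * (of_int (fst \<zeta>) * f1 k + of_int (snd \<zeta>) * f2 k) / sy k)"
    "cmod (NN f1 f2) \<le> zabs \<zeta> * hnorm2 \<nu> \<sigma> \<zeta> (f1, f2) * (sqrt (KE (-\<sigma>)) * Mfun \<sigma> lam \<zeta>)"
proof -
  define tm where "tm k = cc k * (of_int (fst \<zeta>) * f1 k + of_int (snd \<zeta>) * f2 k) / sy k" for k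
  define a1 where "a1 k = hweight \<nu> \<sigma> \<zeta> k * (cmod (f1 k))^2" for k
  define a2 where "a2 k = hweight \<nu> \<sigma> \<zeta> k * (cmod (f2 k))^2" for k
  define e where "e k = hweight \<nu> (-\<sigma>) \<zeta> k * (cmod (cc k / sy k))^2" for k
  have sa1: "summable a1" using f1 by (simp add: Hs_def a1_def[abs_def])
  have sa2: "summable a2" using f2 by (simp add: Hs_def a2_def[abs_def])
  have cse: "(\<lambda>k. cc k / sy k) \<in> Hs \<nu> (-\<sigma>) \<zeta>" "suminf e \<le> KE (-\<sigma>) * suminf (mterm \<sigma> lam \<zeta>)"
    using cs_Hs[of "-\<sigma>"] sig_lo by (simp_all add: e_def[abs_def])
  have se: "summable e" using cse(1) by (simp add: Hs_def e_def[abs_def])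
  have z0: "zabs \<zeta> \<ge> 0" using zabs_props[OF lamS zne] by simp
  have pt: "cmod (tm k) \<le> zabs \<zeta> / 2 * (t * (a1 k + a2 k) + e k / t)" if tp: "t > 0" for t k
  proof -
    define X where "X = sqrt ((cmod (f1 k))^2 + (cmod (f2 k))^2)"
    define y where "y = cmod (cc k / sy k)"
    define w where "w = hweight \<nu> \<sigma> \<zeta> k"
    have wp: "w > 0" using hw_pos by (simp add: w_def)
    have c1: "cmod (of_int (fst \<zeta>) * f1 k + of_int (snd \<zeta>) * f2 k) \<le> zabs \<zeta> * X"
    proof -
      have "cmod (of_int (fst \<zeta>) * f1 k + of_int (snd \<zeta>) * f2 k) \<le> \<bar>real_of_int (fst \<zeta>)\<bar> * cmod (f1 k) + \<bar>real_of_int (snd \<zeta>)\<bar> * cmod (f2 k)"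
        using norm_triangle_ineq[of "of_int (fst \<zeta>) * f1 k" "of_int (snd \<zeta>) * f2 k"]
        by (simp add: norm_mult)
      also have "\<dots> \<le> sqrt (\<bar>real_of_int (fst \<zeta>)\<bar>^2 + \<bar>real_of_int (snd \<zeta>)\<bar>^2) * X"
        unfolding X_def by (rule cs2)
      finally show ?thesis by (simp add: zabs_eq)
    qed
    have "cmod (tm k) = y * cmod (of_int (fst \<zeta>) * f1 k + of_int (snd \<zeta>) * f2 k)"
      by (simp add: tm_def y_def norm_mult norm_divide)
    also have "\<dots> \<le> y * (zabs \<zeta> * X)" using c1 by (intro mult_left_mono) (auto simp: y_def)
    also have "\<dots> = zabs \<zeta> / 2 * (2 * X * y)" by simp
    also have "\<dots> \<le> zabs \<zeta> / 2 * ((t*w) * X^2 + y^2 / (t*w))"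
      using amgm[of "t*w" X y] tp wp z0 by (intro mult_left_mono) auto
    also have "(t*w) * X^2 = t * (a1 k + a2 k)" by (simp add: X_def w_def a1_def a2_def algebra_simps)
    also have "y^2 / (t*w) = e k / t" by (simp add: e_def y_def w_def hw_inv)
    finally show ?thesis .
  qed
  define R where "R t k = zabs \<zeta> / 2 * (t * (a1 k + a2 k) + e k / t)" for t k
  have Rs: "R t sums (zabs \<zeta> / 2 * (t * (suminf a1 + suminf a2) + suminf e / t))" for t
    unfolding R_def[abs_def]
    by (intro sums_mult sums_add sums_divide summable_sums sa1 sa2 se)
  have ptR: "norm (tm k) \<le> R t k" if "t > 0" for t k using pt[OF that, of k] by (simp only: R_def)
  have stm: "summable (\<lambda>k. norm (tm k))"
  proof (rule summable_comparison_test'[OF sums_summable[OF Rs[of 1]]])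
    fix k :: nat show "norm (norm (tm k)) \<le> R 1 k" using ptR[of 1 k] by simp
  qed
  have "summable tm" by (rule summable_norm_cancel[OF stm])
  thus "summable (\<lambda>k. cc k * (of_int (fst \<zeta>) * f1 k + of_int (snd \<zeta>) * f2 k) / sy k)"
    by (simp add: tm_def[abs_def])
  define A where "A = suminf a1 + suminf a2"
  define S where "S = (\<Sum>k. norm (tm k))"
  have A0: "A \<ge> 0" unfolding A_def using ws_nonneg sa1 sa2 by (simp add: a1_def[abs_def] a2_def[abs_def] add_nonneg_nonneg)
  have E0: "suminf e \<ge> 0" using se by (simp add: e_def[abs_def] ws_nonneg)
  have St: "S \<le> zabs \<zeta> / 2 * (t * A + suminf e / t)" if "t > 0" for t
  proof -
    have "S \<le> suminf (R t)" unfolding S_def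
      by (rule suminf_le[OF ptR[OF that] stm sums_summable[OF Rs]])
    thus ?thesis using sums_unique[OF Rs[of t]] by (simp add: A_def)
  qed
  have Sle: "S \<le> zabs \<zeta> * (sqrt A * sqrt (suminf e))"
  proof -
    have z1: "zabs \<zeta> \<ge> 1" using zabs_props[OF lamS zne] by simp
    have "S / zabs \<zeta> \<le> sqrt A * sqrt (suminf e)"
    proof (rule cs_real[OF A0 E0])
      fix t :: real assume "t > 0"
      hence "S \<le> zabs \<zeta> * ((t * A + suminf e / t) / 2)" using St by simp
      thus "S / zabs \<zeta> \<le> (t * A + suminf e / t) / 2" using z1 by (simp add: pos_divide_le_eq mult.commute)
    qed
    thus ?thesis using z1 by (simp add: pos_divide_le_eq mult.commute)
  qed
  have hA: "hnorm2 \<nu> \<sigma> \<zeta> (f1, f2) = sqrt A"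
    unfolding hnorm2_def A_def using hnorm_sq[OF f1] hnorm_sq[OF f2] by (simp add: a1_def[abs_def] a2_def[abs_def])
  have hE: "sqrt (suminf e) \<le> sqrt (KE (-\<sigma>)) * Mfun \<sigma> lam \<zeta>"
    unfolding Mfun_eq real_sqrt_mult[symmetric] by (rule real_sqrt_le_mono[OF cse(2)])
  have "cmod (NN f1 f2) \<le> S" unfolding S_def using summable_norm[OF stm] by (simp add: tm_def)
  also have "\<dots> \<le> zabs \<zeta> * (sqrt A * sqrt (suminf e))" by (rule Sle)
  also have "\<dots> \<le> zabs \<zeta> * (sqrt A * (sqrt (KE (-\<sigma>)) * Mfun \<sigma> lam \<zeta>))"
    using hE z0 A0 by (intro mult_left_mono) auto
  finally show "cmod (NN f1 f2) \<le> zabs \<zeta> * hnorm2 \<nu> \<sigma> \<zeta> (f1, f2) * (sqrt (KE (-\<sigma>)) * Mfun \<sigma> lam \<zeta>)"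
    by (simp add: hA mult.assoc)
qed

lemma sumid:
  assumes f1: "f1 \<in> Hs \<nu> \<sigma> \<zeta>" and f2: "f2 \<in> Hs \<nu> \<sigma> \<zeta>"
  shows "(\<Sum>k. cc k * (of_int (fst \<zeta>) * (f1 k / sy k + (-(\<i> * of_int (fst \<zeta>) * p)) * (cc k / sy k))
           + of_int (snd \<zeta>) * (f2 k / sy k + (-(\<i> * of_int (snd \<zeta>) * p)) * (cc k / sy k))))
         = NN f1 f2 - \<i> * p * complex_of_real (zabs2 \<zeta>) * gg"
proof -
  have z2c: "complex_of_real (zabs2 \<zeta>) = of_int (fst \<zeta>) * of_int (fst \<zeta>) + of_int (snd \<zeta>) * of_int (snd \<zeta>)"
    by (simp add: zabs2_def power2_eq_square)
  have pw: "cc k * (of_int (fst \<zeta>) * (f1 k / sy k + (-(\<i> * of_int (fst \<zeta>) * p)) * (cc k / sy k))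
           + of_int (snd \<zeta>) * (f2 k / sy k + (-(\<i> * of_int (snd \<zeta>) * p)) * (cc k / sy k)))
     = cc k * (of_int (fst \<zeta>) * f1 k + of_int (snd \<zeta>) * f2 k) / sy k - (\<i> * p * complex_of_real (zabs2 \<zeta>)) * (cc k * cc k / sy k)" for k
    unfolding z2c divide_inverse by (simp add: algebra_simps)
  show ?thesis unfolding pw
    using suminf_diff[OF N_bound(1)[OF f1 f2] summable_mult[OF g_summable, of "\<i> * p * complex_of_real (zabs2 \<zeta>)"]]
      suminf_mult[OF g_summable, of "\<i> * p * complex_of_real (zabs2 \<zeta>)"] by simp
qed


definition "Bm = (KS * Om / cw1)^2"
definition "Cc = (\<Sum>k. hweight \<nu> \<sigma> \<zeta> k * (cmod (cc k))^2)"
definition "Bc = 2 * Bm + 6 * zabs2 \<zeta> * Cc"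

lemma sc_c: "summable (\<lambda>k. hweight \<nu> \<sigma> \<zeta> k * (cmod (cc k))^2)"
  using c_Hs unfolding Hs_def mem_Collect_eq by blast

lemma Cc_nonneg: "0 \<le> Cc" unfolding Cc_def by (rule ws_nonneg[OF sc_c])

lemma Bc_nonneg: "0 \<le> Bc"
  unfolding Bc_def Bm_def using Cc_nonneg z2ge1[OF lamS zne] by simp

lemma comp1:
  assumes u: "u \<in> Hs \<nu> (\<sigma>+2) \<zeta>" and xi2: "(cmod xi)^2 \<le> zabs2 \<zeta>"
  shows "(\<lambda>k. sy k * u k + xi * p * cc k) \<in> Hs \<nu> \<sigma> \<zeta>"
    "(hnorm \<nu> \<sigma> \<zeta> (\<lambda>k. sy k * u k + xi * p * cc k))^2 \<le> 2 * Bm * (hnorm \<nu> (\<sigma>+2) \<zeta> u)^2 + 2 * zabs2 \<zeta> * Cc * (cmod p)^2"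
proof -
  have su: "summable (\<lambda>k. hweight \<nu> (\<sigma>+2) \<zeta> k * (cmod (u k))^2)" using u by (simp add: Hs_def)
  note sc = sc_c
  note Cc0 = Cc_nonneg
  have le: "hweight \<nu> \<sigma> \<zeta> k * (cmod (sy k * u k + xi * p * cc k))^2
     \<le> (2 * Bm) * (hweight \<nu> (\<sigma>+2) \<zeta> k * (cmod (u k))^2) + (2 * (cmod xi)^2 * (cmod p)^2) * (hweight \<nu> \<sigma> \<zeta> k * (cmod (cc k))^2)" for k
  proof -
    have hw0: "0 \<le> hweight \<nu> \<sigma> \<zeta> k" by (simp add: hweight_def)
    have "hweight \<nu> \<sigma> \<zeta> k * (cmod (sy k * u k + xi * p * cc k))^2
        \<le> hweight \<nu> \<sigma> \<zeta> k * (2*(cmod (sy k * u k))^2 + 2*(cmod (xi * p * cc k))^2)"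
      by (rule mult_left_mono[OF cmod_add_sq hw0])
    also have "\<dots> = 2 * (hweight \<nu> \<sigma> \<zeta> k * (cmod (sy k * u k))^2) + (2 * (cmod xi)^2 * (cmod p)^2) * (hweight \<nu> \<sigma> \<zeta> k * (cmod (cc k))^2)"
      by (simp add: norm_mult power_mult_distrib algebra_simps)
    also have "\<dots> \<le> (2 * Bm) * (hweight \<nu> (\<sigma>+2) \<zeta> k * (cmod (u k))^2) + (2 * (cmod xi)^2 * (cmod p)^2) * (hweight \<nu> \<sigma> \<zeta> k * (cmod (cc k))^2)"
      using multC[of \<sigma> k "u k"] by (simp add: Bm_def)
    finally show ?thesis .
  qed
  note r = ws_cmp2[OF su sc le]
  show "(\<lambda>k. sy k * u k + xi * p * cc k) \<in> Hs \<nu> \<sigma> \<zeta>" using r(1) u by (simp add: Hs_def oc0)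
  have "(hnorm \<nu> \<sigma> \<zeta> (\<lambda>k. sy k * u k + xi * p * cc k))^2 \<le> 2 * Bm * (hnorm \<nu> (\<sigma>+2) \<zeta> u)^2 + 2 * (cmod xi)^2 * (cmod p)^2 * Cc"
    using r(2) hnorm_sq[OF u] hnorm_sq[of "\<lambda>k. sy k * u k + xi * p * cc k"] r(1) u
    by (simp add: Cc_def Hs_def oc0)
  also have "2 * (cmod xi)^2 * (cmod p)^2 * Cc \<le> 2 * zabs2 \<zeta> * Cc * (cmod p)^2"
  proof -
    have "(cmod xi)^2 * (Cc * (cmod p)^2) \<le> zabs2 \<zeta> * (Cc * (cmod p)^2)"
      by (rule mult_right_mono[OF xi2]) (simp add: Cc0)
    thus ?thesis by (simp add: algebra_simps)
  qed
  finally show "(hnorm \<nu> \<sigma> \<zeta> (\<lambda>k. sy k * u k + xi * p * cc k))^2 \<le> 2 * Bm * (hnorm \<nu> (\<sigma>+2) \<zeta> u)^2 + 2 * zabs2 \<zeta> * Cc * (cmod p)^2"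
    by simp
qed

lemma L0_map:
  assumes u: "u \<in> Hs \<nu> (\<sigma>+2) \<zeta>" and v: "v \<in> Hs \<nu> (\<sigma>+2) \<zeta>" and th: "\<theta> \<in> Hs \<nu> (\<sigma>+2) \<zeta>"
  shows "L0 a \<nu> lam \<zeta> (u, v, p, \<theta>) \<in> L0cod \<nu> \<sigma> \<zeta>"
    "hnorm3 \<nu> \<sigma> \<zeta> (L0 a \<nu> lam \<zeta> (u, v, p, \<theta>)) \<le> sqrt Bc * L0domnorm \<nu> \<sigma> \<zeta> (u, v, p, \<theta>)"
proof -
  have x1: "(cmod (\<i> * of_int (fst \<zeta>)))^2 \<le> zabs2 \<zeta>" by (simp add: norm_mult zabs2_def)
  have x2: "(cmod (\<i> * of_int (snd \<zeta>)))^2 \<le> zabs2 \<zeta>" by (simp add: norm_mult zabs2_def)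
  have x3: "(cmod (0::complex))^2 \<le> zabs2 \<zeta>" using z2ge1[OF lamS zne] by simp
  note c1 = comp1[OF u x1, of p] and c2 = comp1[OF v x2, of p] and c3 = comp1[OF th x3, of p]
  have L: "L0 a \<nu> lam \<zeta> (u, v, p, \<theta>) = ((\<lambda>k. sy k * u k + (\<i> * of_int (fst \<zeta>)) * p * cc k),
      (\<lambda>k. sy k * v k + (\<i> * of_int (snd \<zeta>)) * p * cc k), (\<lambda>k. sy k * \<theta> k + 0 * p * cc k))"
    by (simp add: L0_def)
  show "L0 a \<nu> lam \<zeta> (u, v, p, \<theta>) \<in> L0cod \<nu> \<sigma> \<zeta>" unfolding L L0cod_def using c1(1) c2(1) c3(1) by simp
  have Bm0: "Bm \<ge> 0" by (simp add: Bm_def)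
  note Cc0 = Cc_nonneg
  have z0: "0 \<le> zabs2 \<zeta>" using z2ge1[OF lamS zne] by simp
  define D where "D = (hnorm \<nu> (\<sigma>+2) \<zeta> u)^2 + (hnorm \<nu> (\<sigma>+2) \<zeta> v)^2 + (cmod p)^2 + (hnorm \<nu> (\<sigma>+2) \<zeta> \<theta>)^2"
  have D0: "0 \<le> D" by (simp add: D_def)
  have "(hnorm3 \<nu> \<sigma> \<zeta> (L0 a \<nu> lam \<zeta> (u, v, p, \<theta>)))^2 \<le> Bc * D"
  proof -
    have "(hnorm3 \<nu> \<sigma> \<zeta> (L0 a \<nu> lam \<zeta> (u, v, p, \<theta>)))^2
       = (hnorm \<nu> \<sigma> \<zeta> (\<lambda>k. sy k * u k + (\<i> * of_int (fst \<zeta>)) * p * cc k))^2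
       + (hnorm \<nu> \<sigma> \<zeta> (\<lambda>k. sy k * v k + (\<i> * of_int (snd \<zeta>)) * p * cc k))^2
       + (hnorm \<nu> \<sigma> \<zeta> (\<lambda>k. sy k * \<theta> k + 0 * p * cc k))^2"
      unfolding hnorm3_def L by (simp only: fst_conv snd_conv) (simp add: add_nonneg_nonneg)
    also have "\<dots> \<le> (2 * Bm * (hnorm \<nu> (\<sigma>+2) \<zeta> u)^2 + 2 * zabs2 \<zeta> * Cc * (cmod p)^2)
       + (2 * Bm * (hnorm \<nu> (\<sigma>+2) \<zeta> v)^2 + 2 * zabs2 \<zeta> * Cc * (cmod p)^2)
       + (2 * Bm * (hnorm \<nu> (\<sigma>+2) \<zeta> \<theta>)^2 + 2 * zabs2 \<zeta> * Cc * (cmod p)^2)"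
      using c1(2) c2(2) c3(2) by linarith
    also have "\<dots> \<le> Bc * D"
    proof -
      have "0 \<le> zabs2 \<zeta> * Cc * (cmod p)^2" using z0 Cc0 by simp
      moreover have "0 \<le> Bm * (cmod p)^2" using Bm0 by simp
      moreover have "0 \<le> zabs2 \<zeta> * Cc * (hnorm \<nu> (\<sigma>+2) \<zeta> u)^2" "0 \<le> zabs2 \<zeta> * Cc * (hnorm \<nu> (\<sigma>+2) \<zeta> v)^2"
        "0 \<le> zabs2 \<zeta> * Cc * (hnorm \<nu> (\<sigma>+2) \<zeta> \<theta>)^2" using z0 Cc0 by simp_all
      ultimately show ?thesis unfolding Bc_def D_def by (simp add: algebra_simps)
    qed
    finally show ?thesis .
  qed
  hence "hnorm3 \<nu> \<sigma> \<zeta> (L0 a \<nu> lam \<zeta> (u, v, p, \<theta>)) \<le> sqrt (Bc * D)"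
    by (simp add: real_le_rsqrt)
  also have "\<dots> = sqrt Bc * L0domnorm \<nu> \<sigma> \<zeta> (u, v, p, \<theta>)"
    by (simp add: L0domnorm_def D_def real_sqrt_mult)
  finally show "hnorm3 \<nu> \<sigma> \<zeta> (L0 a \<nu> lam \<zeta> (u, v, p, \<theta>)) \<le> sqrt Bc * L0domnorm \<nu> \<sigma> \<zeta> (u, v, p, \<theta>)" .
qed

lemma L0_cont: "L0_continuous \<nu> \<sigma> \<zeta> (L0 a \<nu> lam \<zeta>) (L0dom a \<nu> \<sigma> \<zeta>)"
  unfolding L0_continuous_def
proof (intro ballI allI impI)
  fix X and \<epsilon> :: real assume X: "X \<in> L0dom a \<nu> \<sigma> \<zeta>" and ep: "\<epsilon> > 0"
  define \<delta> where "\<delta> = \<epsilon> / (sqrt Bc + 1)"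
  have sB: "sqrt Bc \<ge> 0" using Bc_nonneg by simp
  have dp: "\<delta> > 0" unfolding \<delta>_def by (intro divide_pos_pos ep) (use sB in linarith)
  show "\<exists>\<delta>>0. \<forall>X'\<in>L0dom a \<nu> \<sigma> \<zeta>. L0domnorm \<nu> \<sigma> \<zeta> (sub4 X' X) < \<delta> \<longrightarrow>
          hnorm3 \<nu> \<sigma> \<zeta> (sub3 (L0 a \<nu> lam \<zeta> X') (L0 a \<nu> lam \<zeta> X)) < \<epsilon>"
  proof (intro exI[of _ \<delta>] conjI ballI impI dp)
    fix X' assume X': "X' \<in> L0dom a \<nu> \<sigma> \<zeta>" and lt: "L0domnorm \<nu> \<sigma> \<zeta> (sub4 X' X) < \<delta>"
    obtain u v p \<theta> where Xe: "X = (u, v, p, \<theta>)" by (cases X) auto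
    obtain u' v' p' \<theta>' where Xe': "X' = (u', v', p', \<theta>')" by (cases X') auto
    have m: "u \<in> Hs \<nu> (\<sigma>+2) \<zeta>" "v \<in> Hs \<nu> (\<sigma>+2) \<zeta>" "\<theta> \<in> Hs \<nu> (\<sigma>+2) \<zeta>"
      "u' \<in> Hs \<nu> (\<sigma>+2) \<zeta>" "v' \<in> Hs \<nu> (\<sigma>+2) \<zeta>" "\<theta>' \<in> Hs \<nu> (\<sigma>+2) \<zeta>"
      using X X' by (auto simp: Xe Xe' L0dom_def)
    have s4: "sub4 X' X = (\<lambda>k. u' k - u k, \<lambda>k. v' k - v k, p' - p, \<lambda>k. \<theta>' k - \<theta> k)"
      by (simp add: sub4_def Xe Xe')
    have s3: "sub3 (L0 a \<nu> lam \<zeta> X') (L0 a \<nu> lam \<zeta> X) = L0 a \<nu> lam \<zeta> (sub4 X' X)"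
      unfolding s4 by (simp add: sub3_def L0_def Xe Xe' algebra_simps)
    have "hnorm3 \<nu> \<sigma> \<zeta> (sub3 (L0 a \<nu> lam \<zeta> X') (L0 a \<nu> lam \<zeta> X)) \<le> sqrt Bc * L0domnorm \<nu> \<sigma> \<zeta> (sub4 X' X)"
      unfolding s3 s4 by (rule L0_map(2)) (intro Hs_diff m)+
    also have "\<dots> \<le> sqrt Bc * \<delta>" using lt sB by (intro mult_left_mono) auto
    also have "\<dots> < \<epsilon>"
    proof -
      have "sqrt Bc * \<delta> = \<epsilon> * (sqrt Bc / (sqrt Bc + 1))" using sB by (simp add: \<delta>_def field_simps)
      also have "\<dots> < \<epsilon> * 1"
      proof -
        have p1: "0 < sqrt Bc + 1" using sB by linarith
        have q: "sqrt Bc / (sqrt Bc + 1) < 1" using p1 by (subst pos_divide_less_eq) auto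
        show ?thesis by (rule mult_strict_left_mono[OF q ep])
      qed
      finally show ?thesis by simp
    qed
    finally show "hnorm3 \<nu> \<sigma> \<zeta> (sub3 (L0 a \<nu> lam \<zeta> X') (L0 a \<nu> lam \<zeta> X)) < \<epsilon>" .
  qed
qed


lemma gg_nz: "gg \<noteq> 0"
proof -
  have pp: "\<kappa>c > 0" "\<epsilon>c > 0" using d1pos by (simp_all add: \<kappa>c_def \<epsilon>c_def)
  have "\<kappa>g > 0" unfolding \<kappa>g_def using Kc_pos consts_pos pp by (intro divide_pos_pos mult_pos_pos) auto
  hence "\<kappa>g / Om > 0" using Omp by simp
  thus ?thesis using g_lower by auto
qed

lemma char:
  assumes X: "(u, v, p0, \<theta>) \<in> L0dom a \<nu> \<sigma> \<zeta>" and L: "L0 a \<nu> lam \<zeta> (u, v, p0, \<theta>) = (f1, f2, f3)"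
  shows "f1 \<in> Hs \<nu> \<sigma> \<zeta>" "f2 \<in> Hs \<nu> \<sigma> \<zeta>" "f3 \<in> Hs \<nu> \<sigma> \<zeta>"
    "u = (\<lambda>k. f1 k / sy k + (-(\<i> * of_int (fst \<zeta>) * p0)) * (cc k / sy k))"
    "v = (\<lambda>k. f2 k / sy k + (-(\<i> * of_int (snd \<zeta>) * p0)) * (cc k / sy k))"
    "\<theta> = (\<lambda>k. f3 k / sy k)"
    "NN f1 f2 = \<i> * p0 * complex_of_real (zabs2 \<zeta>) * gg"
proof -
  have m: "u \<in> Hs \<nu> (\<sigma>+2) \<zeta>" "v \<in> Hs \<nu> (\<sigma>+2) \<zeta>" "\<theta> \<in> Hs \<nu> (\<sigma>+2) \<zeta>" and dv: "divfree a \<zeta> u v"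
    using X by (auto simp: L0dom_def)
  have "(f1, f2, f3) \<in> L0cod \<nu> \<sigma> \<zeta>" using L0_map(1)[OF m, of p0] L by simp
  thus f: "f1 \<in> Hs \<nu> \<sigma> \<zeta>" "f2 \<in> Hs \<nu> \<sigma> \<zeta>" "f3 \<in> Hs \<nu> \<sigma> \<zeta>" by (auto simp: L0cod_def)
  have fe: "f1 = (\<lambda>k. sy k * u k + \<i> * of_int (fst \<zeta>) * p0 * cc k)"
    "f2 = (\<lambda>k. sy k * v k + \<i> * of_int (snd \<zeta>) * p0 * cc k)"
    "f3 = (\<lambda>k. sy k * \<theta> k)" using L by (simp_all add: L0_def)
  show ue: "u = (\<lambda>k. f1 k / sy k + (-(\<i> * of_int (fst \<zeta>) * p0)) * (cc k / sy k))"
  proof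
    fix k show "u k = f1 k / sy k + (-(\<i> * of_int (fst \<zeta>) * p0)) * (cc k / sy k)"
      using snz[of k] by (simp add: fe field_simps)
  qed
  show ve: "v = (\<lambda>k. f2 k / sy k + (-(\<i> * of_int (snd \<zeta>) * p0)) * (cc k / sy k))"
  proof
    fix k show "v k = f2 k / sy k + (-(\<i> * of_int (snd \<zeta>) * p0)) * (cc k / sy k)"
      using snz[of k] by (simp add: fe field_simps)
  qed
  show "\<theta> = (\<lambda>k. f3 k / sy k)"
  proof
    fix k show "\<theta> k = f3 k / sy k" using snz[of k] by (simp add: fe)
  qed
  have "(\<Sum>k. cc k * (of_int (fst \<zeta>) * (f1 k / sy k + (-(\<i> * of_int (fst \<zeta>) * p0)) * (cc k / sy k))
           + of_int (snd \<zeta>) * (f2 k / sy k + (-(\<i> * of_int (snd \<zeta>) * p0)) * (cc k / sy k)))) = 0"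
    using dv unfolding divfree_def by (subst (asm) ue, subst (asm) ve) simp
  hence "NN f1 f2 - \<i> * p0 * complex_of_real (zabs2 \<zeta>) * gg = 0" using sumid[OF f(1,2), of p0] by simp
  thus "NN f1 f2 = \<i> * p0 * complex_of_real (zabs2 \<zeta>) * gg" by simp
qed

lemma Y2mem:
  assumes f: "f \<in> Hs \<nu> \<sigma> \<zeta>"
  shows "(\<lambda>k. f k / sy k) \<in> Hs \<nu> (\<sigma>+2) \<zeta>" "hnorm \<nu> (\<sigma>+2) \<zeta> (\<lambda>k. f k / sy k) \<le> (cw2/kS) * hnorm \<nu> \<sigma> \<zeta> f"
    "(\<lambda>k. f k / sy k) \<in> Hs \<nu> \<sigma> \<zeta>" "hnorm \<nu> \<sigma> \<zeta> (\<lambda>k. f k / sy k) \<le> (1/(kS*Om)) * hnorm \<nu> \<sigma> \<zeta> f"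
proof -
  have f0: "f 0 / sy 0 = 0" using f by (simp add: Hs_def)
  have B0: "0 \<le> cw2/kS" "0 \<le> 1/(kS*Om)" using consts_pos Omp by auto
  note r1 = hn_cmp[OF f f0 B0(1) multB[of \<sigma>]]
  show "(\<lambda>k. f k / sy k) \<in> Hs \<nu> (\<sigma>+2) \<zeta>" "hnorm \<nu> (\<sigma>+2) \<zeta> (\<lambda>k. f k / sy k) \<le> (cw2/kS) * hnorm \<nu> \<sigma> \<zeta> f"
    using r1 by auto
  have le: "hweight \<nu> \<sigma> \<zeta> k * (cmod (f k / sy k))^2 \<le> (1/(kS*Om))^2 * (hweight \<nu> \<sigma> \<zeta> k * (cmod (f k))^2)" for k
  proof -
    have Op: "Om^2 > 0" using Omp by simp
    have "Om^2 * (hweight \<nu> \<sigma> \<zeta> k * (cmod (f k / sy k))^2) \<le> (1/kS)^2 * (hweight \<nu> \<sigma> \<zeta> k * (cmod (f k))^2)"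
      by (rule multA)
    hence "hweight \<nu> \<sigma> \<zeta> k * (cmod (f k / sy k))^2 \<le> (1/kS)^2 * (hweight \<nu> \<sigma> \<zeta> k * (cmod (f k))^2) / Om^2"
      using Op by (simp add: pos_le_divide_eq mult.commute)
    also have "\<dots> = (1/(kS*Om))^2 * (hweight \<nu> \<sigma> \<zeta> k * (cmod (f k))^2)"
      using Op consts_pos by (simp add: power_mult_distrib field_simps)
    finally show ?thesis .
  qed
  note r2 = hn_cmp[OF f f0 B0(2) le]
  show "(\<lambda>k. f k / sy k) \<in> Hs \<nu> \<sigma> \<zeta>" "hnorm \<nu> \<sigma> \<zeta> (\<lambda>k. f k / sy k) \<le> (1/(kS*Om)) * hnorm \<nu> \<sigma> \<zeta> f"
    using r2 by auto
qed

lemma bij: "bij_betw (L0 a \<nu> lam \<zeta>) (L0dom a \<nu> \<sigma> \<zeta>) (L0cod \<nu> \<sigma> \<zeta>)"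
  unfolding bij_betw_def
proof (intro conjI)
  have nz: "\<i> * complex_of_real (zabs2 \<zeta>) * gg \<noteq> 0" using gg_nz z2ge1[OF lamS zne] by simp
  show "inj_on (L0 a \<nu> lam \<zeta>) (L0dom a \<nu> \<sigma> \<zeta>)"
  proof (rule inj_onI)
    fix X Y assume X: "X \<in> L0dom a \<nu> \<sigma> \<zeta>" and Y: "Y \<in> L0dom a \<nu> \<sigma> \<zeta>" and e: "L0 a \<nu> lam \<zeta> X = L0 a \<nu> lam \<zeta> Y"
    obtain u v p \<theta> where Xe: "X = (u, v, p, \<theta>)" by (cases X) auto
    obtain u' v' p' \<theta>' where Ye: "Y = (u', v', p', \<theta>')" by (cases Y) auto
    obtain f1 f2 f3 where F: "L0 a \<nu> lam \<zeta> X = (f1, f2, f3)" by (cases "L0 a \<nu> lam \<zeta> X") auto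
    note c1 = char[OF X[unfolded Xe] F[unfolded Xe]]
    note c2 = char[OF Y[unfolded Ye] F[unfolded e Ye]]
    have "p * (\<i> * complex_of_real (zabs2 \<zeta>) * gg) = p' * (\<i> * complex_of_real (zabs2 \<zeta>) * gg)"
      using c1(7) c2(7) by (simp add: mult_ac)
    hence pp: "p = p'" using nz by simp
    show "X = Y" unfolding Xe Ye using c1(4,5,6) c2(4,5,6) pp by simp
  qed
  show "L0 a \<nu> lam \<zeta> ` L0dom a \<nu> \<sigma> \<zeta> = L0cod \<nu> \<sigma> \<zeta>"
  proof
    show "L0 a \<nu> lam \<zeta> ` L0dom a \<nu> \<sigma> \<zeta> \<subseteq> L0cod \<nu> \<sigma> \<zeta>"
      using L0_map(1) by (auto simp: L0dom_def)
    show "L0cod \<nu> \<sigma> \<zeta> \<subseteq> L0 a \<nu> lam \<zeta> ` L0dom a \<nu> \<sigma> \<zeta>"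
    proof
      fix F assume F: "F \<in> L0cod \<nu> \<sigma> \<zeta>"
      obtain f1 f2 f3 where Fe: "F = (f1, f2, f3)" by (cases F) auto
      have f: "f1 \<in> Hs \<nu> \<sigma> \<zeta>" "f2 \<in> Hs \<nu> \<sigma> \<zeta>" "f3 \<in> Hs \<nu> \<sigma> \<zeta>" using F by (auto simp: Fe L0cod_def)
      define p where "p = NN f1 f2 / (\<i> * complex_of_real (zabs2 \<zeta>) * gg)"
      define u where "u = (\<lambda>k. f1 k / sy k + (-(\<i> * of_int (fst \<zeta>) * p)) * (cc k / sy k))"
      define v where "v = (\<lambda>k. f2 k / sy k + (-(\<i> * of_int (snd \<zeta>) * p)) * (cc k / sy k))"
      define \<theta> where "\<theta> = (\<lambda>k. f3 k / sy k)"
      have cs: "(\<lambda>k. cc k / sy k) \<in> Hs \<nu> (\<sigma>+2) \<zeta>" by (rule cs_Hs) (use sig_hi in simp)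
      have um: "u \<in> Hs \<nu> (\<sigma>+2) \<zeta>" unfolding u_def by (intro Hs_add Y2mem(1) Hs_scale(1) f cs)
      have vm: "v \<in> Hs \<nu> (\<sigma>+2) \<zeta>" unfolding v_def by (intro Hs_add Y2mem(1) Hs_scale(1) f cs)
      have tm: "\<theta> \<in> Hs \<nu> (\<sigma>+2) \<zeta>" unfolding \<theta>_def by (intro Y2mem(1) f)
      have dv: "divfree a \<zeta> u v"
      proof -
        have "\<i> * p * complex_of_real (zabs2 \<zeta>) * gg = NN f1 f2"
          using nz unfolding p_def by (simp add: field_simps)
        thus ?thesis unfolding divfree_def u_def v_def using sumid[OF f(1,2), of p] by simp
      qed
      have "L0 a \<nu> lam \<zeta> (u, v, p, \<theta>) = (f1, f2, f3)"
      proof -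
        have "(\<lambda>k. sy k * u k + \<i> * of_int (fst \<zeta>) * p * cc k) = f1"
        proof fix k show "sy k * u k + \<i> * of_int (fst \<zeta>) * p * cc k = f1 k"
            using snz[of k] by (simp add: u_def field_simps) qed
        moreover have "(\<lambda>k. sy k * v k + \<i> * of_int (snd \<zeta>) * p * cc k) = f2"
        proof fix k show "sy k * v k + \<i> * of_int (snd \<zeta>) * p * cc k = f2 k"
            using snz[of k] by (simp add: v_def field_simps) qed
        moreover have "(\<lambda>k. sy k * \<theta> k) = f3"
        proof fix k show "sy k * \<theta> k = f3 k" using snz[of k] by (simp add: \<theta>_def) qed
        ultimately show ?thesis by (simp add: L0_def)
      qed
      moreover have "(u, v, p, \<theta>) \<in> L0dom a \<nu> \<sigma> \<zeta>" using um vm tm dv by (simp add: L0dom_def)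
      ultimately show "F \<in> L0 a \<nu> lam \<zeta> ` L0dom a \<nu> \<sigma> \<zeta>" unfolding Fe by (metis image_eqI)
    qed
  qed
qed


lemma KE_nonneg: "0 \<le> KE s"
  unfolding KE_def using consts_pos by (auto simp: le_max_iff_disj)

lemma hn_cs: assumes "s < 5/2"
  shows "hnorm \<nu> s \<zeta> (\<lambda>k. cc k / sy k) \<le> sqrt (KE s) * Mfun (-s) lam \<zeta>"
  unfolding hnorm_def Mfun_eq real_sqrt_mult[symmetric] by (rule real_sqrt_le_mono[OF cs_Hs(2)[OF assms]])

lemma Y1norm: assumes "s < 5/2"
  shows "hnorm2 \<nu> s \<zeta> (\<lambda>k. (-(\<i> * of_int (fst \<zeta>) * p0)) * (cc k / sy k), \<lambda>k. (-(\<i> * of_int (snd \<zeta>) * p0)) * (cc k / sy k))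
         = zabs \<zeta> * cmod p0 * hnorm \<nu> s \<zeta> (\<lambda>k. cc k / sy k)"
proof -
  have m: "(\<lambda>k. cc k / sy k) \<in> Hs \<nu> s \<zeta>" by (rule cs_Hs(1)[OF assms])
  define hn where "hn = hnorm \<nu> s \<zeta> (\<lambda>k. cc k / sy k)"
  have hn0: "hn \<ge> 0" unfolding hn_def by (rule hnorm_nonneg[OF m])
  have "hnorm2 \<nu> s \<zeta> (\<lambda>k. (-(\<i> * of_int (fst \<zeta>) * p0)) * (cc k / sy k), \<lambda>k. (-(\<i> * of_int (snd \<zeta>) * p0)) * (cc k / sy k))
      = sqrt ((cmod (\<i> * of_int (fst \<zeta>) * p0) * hn)^2 + (cmod (\<i> * of_int (snd \<zeta>) * p0) * hn)^2)"
    unfolding hnorm2_def fst_conv snd_conv Hs_scale(2)[OF m] hn_def by simp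
  also have "(cmod (\<i> * of_int (fst \<zeta>) * p0) * hn)^2 + (cmod (\<i> * of_int (snd \<zeta>) * p0) * hn)^2
      = (zabs \<zeta> * cmod p0 * hn)^2"
    using zabs_props(1)[OF lamS zne] by (simp add: norm_mult power_mult_distrib zabs2_def algebra_simps)
  also have "sqrt ((zabs \<zeta> * cmod p0 * hn)^2) = zabs \<zeta> * cmod p0 * hn"
    using hn0 zabs_props(2)[OF lamS zne] by simp
  finally show ?thesis by (simp add: hn_def)
qed

lemma est:
  assumes X: "(u, v, p0, \<theta>) \<in> L0dom a \<nu> \<sigma> \<zeta>" and L: "L0 a \<nu> lam \<zeta> (u, v, p0, \<theta>) = (f1, f2, f3)"
  shows "\<exists>Y1 Y2. fst Y1 \<in> Hs \<nu> (\<sigma> + 2) \<zeta> \<and> snd Y1 \<in> Hs \<nu> (\<sigma> + 2) \<zeta>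
           \<and> fst Y2 \<in> Hs \<nu> (\<sigma> + 2) \<zeta> \<and> snd Y2 \<in> Hs \<nu> (\<sigma> + 2) \<zeta>
           \<and> u = (\<lambda>k. fst Y1 k + fst Y2 k) \<and> v = (\<lambda>k. snd Y1 k + snd Y2 k)
           \<and> zabs \<zeta> * cmod p0
               \<le> Cfin * jomega2 lam \<zeta> * Mfun \<sigma> lam \<zeta> * hnorm2 \<nu> \<sigma> \<zeta> (f1, f2)
           \<and> Mfun (-\<sigma>-2) lam \<zeta> / Mfun (-\<sigma>) lam \<zeta> * hnorm2 \<nu> \<sigma> \<zeta> Y1 + hnorm2 \<nu> (\<sigma>+2) \<zeta> Y1
               \<le> Cfin * jomega2 lam \<zeta> * Mfun \<sigma> lam \<zeta> * Mfun (-\<sigma>-2) lam \<zeta> * hnorm2 \<nu> \<sigma> \<zeta> (f1, f2)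
           \<and> jomega2 lam \<zeta> * hnorm2 \<nu> \<sigma> \<zeta> Y2 + hnorm2 \<nu> (\<sigma>+2) \<zeta> Y2
               \<le> Cfin * hnorm2 \<nu> \<sigma> \<zeta> (f1, f2)
           \<and> jomega2 lam \<zeta> * hnorm \<nu> \<sigma> \<zeta> \<theta> + hnorm \<nu> (\<sigma>+2) \<zeta> \<theta>
               \<le> Cfin * hnorm \<nu> \<sigma> \<zeta> f3"
proof -
  note c = char[OF X L]
  define c1 where "c1 = -(\<i> * of_int (fst \<zeta>) * p0)"
  define c2 where "c2 = -(\<i> * of_int (snd \<zeta>) * p0)"
  define Y1 where "Y1 = (\<lambda>k. c1 * (cc k / sy k), \<lambda>k. c2 * (cc k / sy k))"
  define Y2 where "Y2 = (\<lambda>k. f1 k / sy k, \<lambda>k. f2 k / sy k)"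
  define H where "H = hnorm2 \<nu> \<sigma> \<zeta> (f1, f2)"
  define M where "M = Mfun \<sigma> lam \<zeta>"
  define M0 where "M0 = Mfun (-\<sigma>) lam \<zeta>"
  define M2 where "M2 = Mfun (-\<sigma>-2) lam \<zeta>"
  define Z where "Z = zabs \<zeta> * cmod p0"
  have H0: "0 \<le> H" by (simp add: H_def hnorm2_def)
  have M0n: "0 \<le> M" "0 \<le> M0" "0 \<le> M2" unfolding M_def M0_def M2_def
    using Mfun_nonneg sig_lo sig_hi by auto
  have z1: "zabs \<zeta> \<ge> 1" using zabs_props[OF lamS zne] by simp
  have Z0: "0 \<le> Z" using z1 by (simp add: Z_def)
  have Om1: "Om \<ge> 1" using Omp by simp
  have kgp: "\<kappa>g > 0"
  proof -
    have pp: "\<kappa>c > 0" "\<epsilon>c > 0" using d1pos by (simp_all add: \<kappa>c_def \<epsilon>c_def)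
    show ?thesis unfolding \<kappa>g_def using Kc_pos consts_pos pp by (intro divide_pos_pos mult_pos_pos) auto
  qed
  have Cs: "0 \<le> Ca" "0 \<le> Cb" "0 \<le> Cc2" "Ca \<le> Cfin" "Cb \<le> Cfin" "Cc2 \<le> Cfin"
  proof -
    show "0 \<le> Ca" unfolding Ca_def using kgp KE_nonneg[of "-\<sigma>"] by (intro divide_nonneg_pos) auto
    thus "0 \<le> Cb" unfolding Cb_def using KE_nonneg by (intro mult_nonneg_nonneg add_nonneg_nonneg) auto
    show "0 \<le> Cc2" unfolding Cc2_def using consts_pos by simp
    with \<open>0 \<le> Ca\<close> \<open>0 \<le> Cb\<close> show "Ca \<le> Cfin" "Cb \<le> Cfin" "Cc2 \<le> Cfin" unfolding Cfin_def by linarith+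
  qed
  have cs2: "(\<lambda>k. cc k / sy k) \<in> Hs \<nu> (\<sigma>+2) \<zeta>" by (rule cs_Hs(1)) (use sig_hi in simp)
  have ZA: "Z \<le> Ca * (Om * M * H)"
  proof -
    have "cmod (NN f1 f2) = cmod p0 * zabs2 \<zeta> * cmod gg" using c(7) z2ge1[OF lamS zne] by (simp add: norm_mult)
    also have "zabs2 \<zeta> = zabs \<zeta> * zabs \<zeta>" using zabs_props(1)[OF lamS zne] by (simp add: power2_eq_square)
    finally have "zabs \<zeta> * (Z * cmod gg) \<le> zabs \<zeta> * (H * (sqrt (KE (-\<sigma>)) * M))"
      using N_bound(2)[OF c(1,2)] unfolding H_def M_def Z_def by (simp add: mult_ac)
    hence "Z * cmod gg \<le> H * (sqrt (KE (-\<sigma>)) * M)" using z1 by simp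
    moreover have gp: "cmod gg > 0" using gg_nz by simp
    ultimately have "Z \<le> H * (sqrt (KE (-\<sigma>)) * M) / cmod gg" by (simp add: pos_le_divide_eq)
    also have "\<dots> \<le> H * (sqrt (KE (-\<sigma>)) * M) / (\<kappa>g / Om)"
      using g_lower gp kgp Om1 H0 M0n KE_nonneg by (intro divide_left_mono mult_nonneg_nonneg) auto
    also have "\<dots> = Ca * (Om * M * H)" unfolding Ca_def using kgp Om1 by (simp add: field_simps)
    finally show ?thesis .
  qed
  have Y1s: "hnorm2 \<nu> \<sigma> \<zeta> Y1 = Z * hnorm \<nu> \<sigma> \<zeta> (\<lambda>k. cc k / sy k)"
    "hnorm2 \<nu> (\<sigma>+2) \<zeta> Y1 = Z * hnorm \<nu> (\<sigma>+2) \<zeta> (\<lambda>k. cc k / sy k)"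
    unfolding Y1_def c1_def c2_def Z_def using Y1norm sig_hi by simp_all
  have hb: "hnorm \<nu> \<sigma> \<zeta> (\<lambda>k. cc k / sy k) \<le> sqrt (KE \<sigma>) * M0"
    "hnorm \<nu> (\<sigma>+2) \<zeta> (\<lambda>k. cc k / sy k) \<le> sqrt (KE (\<sigma>+2)) * M2"
    using hn_cs[of \<sigma>] hn_cs[of "\<sigma>+2"] sig_hi unfolding M0_def M2_def by (simp_all add: algebra_simps)
  have B: "M2 / M0 * hnorm2 \<nu> \<sigma> \<zeta> Y1 + hnorm2 \<nu> (\<sigma>+2) \<zeta> Y1 \<le> Cb * (Om * M * M2 * H)"
  proof -
    have r: "M2 / M0 * M0 \<le> M2" using M0n by (cases "M0 = 0") auto
    have "M2 / M0 * hnorm2 \<nu> \<sigma> \<zeta> Y1 \<le> M2 / M0 * (Z * (sqrt (KE \<sigma>) * M0))"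
      unfolding Y1s using hb(1) Z0 M0n by (intro mult_left_mono) auto
    also have "\<dots> = Z * sqrt (KE \<sigma>) * (M2 / M0 * M0)" by (simp add: mult_ac)
    also have "\<dots> \<le> Z * sqrt (KE \<sigma>) * M2" using r Z0 KE_nonneg by (intro mult_left_mono) auto
    finally have b1: "M2 / M0 * hnorm2 \<nu> \<sigma> \<zeta> Y1 \<le> Z * sqrt (KE \<sigma>) * M2" .
    have b2: "hnorm2 \<nu> (\<sigma>+2) \<zeta> Y1 \<le> Z * (sqrt (KE (\<sigma>+2)) * M2)"
      unfolding Y1s using hb(2) Z0 by (intro mult_left_mono) auto
    have "M2 / M0 * hnorm2 \<nu> \<sigma> \<zeta> Y1 + hnorm2 \<nu> (\<sigma>+2) \<zeta> Y1 \<le> Z * ((sqrt (KE \<sigma>) + sqrt (KE (\<sigma>+2))) * M2)"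
      using b1 b2 by (simp add: algebra_simps)
    also have "\<dots> \<le> Ca * (Om * M * H) * ((sqrt (KE \<sigma>) + sqrt (KE (\<sigma>+2))) * M2)"
      using ZA M0n KE_nonneg by (intro mult_right_mono) auto
    also have "\<dots> = Cb * (Om * M * M2 * H)" by (simp add: Cb_def mult_ac)
    finally show ?thesis .
  qed
  have y2: "f1 k / sy k = fst Y2 k" "f2 k / sy k = snd Y2 k" for k by (simp_all add: Y2_def)
  note a1 = Y2mem[OF c(1)] and a2 = Y2mem[OF c(2)] and a3 = Y2mem[OF c(3)]
  have hf: "0 \<le> hnorm \<nu> \<sigma> \<zeta> f1" "0 \<le> hnorm \<nu> \<sigma> \<zeta> f2" "0 \<le> hnorm \<nu> \<sigma> \<zeta> f3"
    using c(1,2,3) by (simp_all add: hnorm_nonneg)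
  have Bp: "0 \<le> 1/(kS*Om)" "0 \<le> cw2/kS" using consts_pos Om1 by auto
  have C1: "Om * hnorm2 \<nu> \<sigma> \<zeta> Y2 + hnorm2 \<nu> (\<sigma>+2) \<zeta> Y2 \<le> Cc2 * H"
  proof -
    have "hnorm2 \<nu> \<sigma> \<zeta> Y2 \<le> 1/(kS*Om) * H"
      unfolding hnorm2_def Y2_def H_def fst_conv snd_conv
      by (rule sqrt2_mono) (use a1(3,4) a2(3,4) Bp hnorm_nonneg in auto)
    hence "Om * hnorm2 \<nu> \<sigma> \<zeta> Y2 \<le> Om * (1/(kS*Om) * H)" using Om1 by (intro mult_left_mono) auto
    also have "\<dots> = H / kS" using Om1 by (simp add: field_simps)
    finally have x1: "Om * hnorm2 \<nu> \<sigma> \<zeta> Y2 \<le> H / kS" .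
    have x2: "hnorm2 \<nu> (\<sigma>+2) \<zeta> Y2 \<le> cw2/kS * H"
      unfolding hnorm2_def Y2_def H_def fst_conv snd_conv
      by (rule sqrt2_mono) (use a1(1,2) a2(1,2) Bp hnorm_nonneg in auto)
    have "H / kS + cw2/kS * H = Cc2 * H" unfolding Cc2_def add_divide_distrib distrib_right by simp
    thus ?thesis using x1 x2 by linarith
  qed
  have D1: "Om * hnorm \<nu> \<sigma> \<zeta> \<theta> + hnorm \<nu> (\<sigma>+2) \<zeta> \<theta> \<le> Cc2 * hnorm \<nu> \<sigma> \<zeta> f3"
  proof -
    have "Om * hnorm \<nu> \<sigma> \<zeta> \<theta> \<le> Om * (1/(kS*Om) * hnorm \<nu> \<sigma> \<zeta> f3)"
      unfolding c(6) using a3(4) Om1 by (intro mult_left_mono) auto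
    also have "\<dots> = hnorm \<nu> \<sigma> \<zeta> f3 / kS" using Om1 by (simp add: field_simps)
    finally have x1: "Om * hnorm \<nu> \<sigma> \<zeta> \<theta> \<le> hnorm \<nu> \<sigma> \<zeta> f3 / kS" .
    have x2: "hnorm \<nu> (\<sigma>+2) \<zeta> \<theta> \<le> cw2/kS * hnorm \<nu> \<sigma> \<zeta> f3" unfolding c(6) by (rule a3(2))
    have "hnorm \<nu> \<sigma> \<zeta> f3 / kS + cw2/kS * hnorm \<nu> \<sigma> \<zeta> f3 = Cc2 * hnorm \<nu> \<sigma> \<zeta> f3" unfolding Cc2_def add_divide_distrib distrib_right by simp
    thus ?thesis using x1 x2 by linarith
  qed
  have nn: "0 \<le> Om * M * H" "0 \<le> Om * M * M2 * H" using Om1 M0n H0 by simp_all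
  have ue: "u = (\<lambda>k. fst Y1 k + fst Y2 k)" "v = (\<lambda>k. snd Y1 k + snd Y2 k)"
    unfolding c(4) c(5) Y1_def Y2_def c1_def c2_def by (simp_all add: add.commute)
  have mem: "fst Y1 \<in> Hs \<nu> (\<sigma> + 2) \<zeta>" "snd Y1 \<in> Hs \<nu> (\<sigma> + 2) \<zeta>" "fst Y2 \<in> Hs \<nu> (\<sigma> + 2) \<zeta>" "snd Y2 \<in> Hs \<nu> (\<sigma> + 2) \<zeta>"
    unfolding Y1_def Y2_def fst_conv snd_conv using Hs_scale(1)[OF cs2] a1(1) a2(1) by auto
  have fa: "Z \<le> Cfin * (Om * M * H)" using ZA mult_right_mono[OF Cs(4) nn(1)] by linarith
  have fb: "M2 / M0 * hnorm2 \<nu> \<sigma> \<zeta> Y1 + hnorm2 \<nu> (\<sigma>+2) \<zeta> Y1 \<le> Cfin * (Om * M * M2 * H)"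
    using B mult_right_mono[OF Cs(5) nn(2)] by linarith
  have fc: "Om * hnorm2 \<nu> \<sigma> \<zeta> Y2 + hnorm2 \<nu> (\<sigma>+2) \<zeta> Y2 \<le> Cfin * H"
    using C1 mult_right_mono[OF Cs(6) H0] by linarith
  have fd: "Om * hnorm \<nu> \<sigma> \<zeta> \<theta> + hnorm \<nu> (\<sigma>+2) \<zeta> \<theta> \<le> Cfin * hnorm \<nu> \<sigma> \<zeta> f3"
    using D1 mult_right_mono[OF Cs(6) hf(3)] by linarith
  show ?thesis
    apply (rule exI[of _ Y1], rule exI[of _ Y2])
    using mem ue fa fb fc fd unfolding Z_def M_def M0_def M2_def H_def by (simp add: mult_ac)
qed

end
end

theorem theorem2:
  fixes a \<nu> \<delta>1 \<delta>2 \<sigma> :: real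
  assumes "a > 0" and "\<nu> > 0"
    and "0 < \<delta>2" and "\<delta>2 < min (\<nu> * pi^2 / (2 * a^2)) (\<nu> / 2)" and "\<delta>1 > 0"
    and "-3/2 < \<sigma>" and "\<sigma> < 1/2" and "\<sigma> \<noteq> -1/2"
  shows "\<exists>C::real. \<forall>lam \<zeta>. lam \<in> Sset \<delta>1 \<delta>2 \<and> \<zeta> \<noteq> (0, 0) \<longrightarrow>
     L0_continuous \<nu> \<sigma> \<zeta> (L0 a \<nu> lam \<zeta>) (L0dom a \<nu> \<sigma> \<zeta>)
     \<and> bij_betw (L0 a \<nu> lam \<zeta>) (L0dom a \<nu> \<sigma> \<zeta>) (L0cod \<nu> \<sigma> \<zeta>)
     \<and> (\<forall>u v p0 \<theta> f1 f2 f3. (u, v, p0, \<theta>) \<in> L0dom a \<nu> \<sigma> \<zeta>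
          \<and> L0 a \<nu> lam \<zeta> (u, v, p0, \<theta>) = (f1, f2, f3) \<longrightarrow>
        (\<exists>Y1 Y2. fst Y1 \<in> Hs \<nu> (\<sigma> + 2) \<zeta> \<and> snd Y1 \<in> Hs \<nu> (\<sigma> + 2) \<zeta>
           \<and> fst Y2 \<in> Hs \<nu> (\<sigma> + 2) \<zeta> \<and> snd Y2 \<in> Hs \<nu> (\<sigma> + 2) \<zeta>
           \<and> u = (\<lambda>k. fst Y1 k + fst Y2 k) \<and> v = (\<lambda>k. snd Y1 k + snd Y2 k)
           \<and> zabs \<zeta> * cmod p0
               \<le> C * jomega2 lam \<zeta> * Mfun \<sigma> lam \<zeta> * hnorm2 \<nu> \<sigma> \<zeta> (f1, f2)
           \<and> Mfun (-\<sigma>-2) lam \<zeta> / Mfun (-\<sigma>) lam \<zeta> * hnorm2 \<nu> \<sigma> \<zeta> Y1 + hnorm2 \<nu> (\<sigma>+2) \<zeta> Y1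
               \<le> C * jomega2 lam \<zeta> * Mfun \<sigma> lam \<zeta> * Mfun (-\<sigma>-2) lam \<zeta> * hnorm2 \<nu> \<sigma> \<zeta> (f1, f2)
           \<and> jomega2 lam \<zeta> * hnorm2 \<nu> \<sigma> \<zeta> Y2 + hnorm2 \<nu> (\<sigma>+2) \<zeta> Y2
               \<le> C * hnorm2 \<nu> \<sigma> \<zeta> (f1, f2)
           \<and> jomega2 lam \<zeta> * hnorm \<nu> \<sigma> \<zeta> \<theta> + hnorm \<nu> (\<sigma>+2) \<zeta> \<theta>
               \<le> C * hnorm \<nu> \<sigma> \<zeta> f3))"
proof -
  interpret S: setting a \<nu> \<delta>1 \<delta>2 \<sigma>
    by unfold_locales (use assms in auto)
  show ?thesis
  proof (intro exI[of _ S.Cfin] allI impI)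
    fix lam :: complex and \<zeta> :: "int \<times> int" assume h: "lam \<in> Sset \<delta>1 \<delta>2 \<and> \<zeta> \<noteq> (0, 0)"
    hence lamS: "lam \<in> Sset \<delta>1 \<delta>2" and zne: "\<zeta> \<noteq> (0, 0)" by auto
    show "L0_continuous \<nu> \<sigma> \<zeta> (L0 a \<nu> lam \<zeta>) (L0dom a \<nu> \<sigma> \<zeta>)
     \<and> bij_betw (L0 a \<nu> lam \<zeta>) (L0dom a \<nu> \<sigma> \<zeta>) (L0cod \<nu> \<sigma> \<zeta>)
     \<and> (\<forall>u v p0 \<theta> f1 f2 f3. (u, v, p0, \<theta>) \<in> L0dom a \<nu> \<sigma> \<zeta>
          \<and> L0 a \<nu> lam \<zeta> (u, v, p0, \<theta>) = (f1, f2, f3) \<longrightarrow>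
        (\<exists>Y1 Y2. fst Y1 \<in> Hs \<nu> (\<sigma> + 2) \<zeta> \<and> snd Y1 \<in> Hs \<nu> (\<sigma> + 2) \<zeta>
           \<and> fst Y2 \<in> Hs \<nu> (\<sigma> + 2) \<zeta> \<and> snd Y2 \<in> Hs \<nu> (\<sigma> + 2) \<zeta>
           \<and> u = (\<lambda>k. fst Y1 k + fst Y2 k) \<and> v = (\<lambda>k. snd Y1 k + snd Y2 k)
           \<and> zabs \<zeta> * cmod p0
               \<le> S.Cfin * jomega2 lam \<zeta> * Mfun \<sigma> lam \<zeta> * hnorm2 \<nu> \<sigma> \<zeta> (f1, f2)
           \<and> Mfun (-\<sigma>-2) lam \<zeta> / Mfun (-\<sigma>) lam \<zeta> * hnorm2 \<nu> \<sigma> \<zeta> Y1 + hnorm2 \<nu> (\<sigma>+2) \<zeta> Y1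
               \<le> S.Cfin * jomega2 lam \<zeta> * Mfun \<sigma> lam \<zeta> * Mfun (-\<sigma>-2) lam \<zeta> * hnorm2 \<nu> \<sigma> \<zeta> (f1, f2)
           \<and> jomega2 lam \<zeta> * hnorm2 \<nu> \<sigma> \<zeta> Y2 + hnorm2 \<nu> (\<sigma>+2) \<zeta> Y2
               \<le> S.Cfin * hnorm2 \<nu> \<sigma> \<zeta> (f1, f2)
           \<and> jomega2 lam \<zeta> * hnorm \<nu> \<sigma> \<zeta> \<theta> + hnorm \<nu> (\<sigma>+2) \<zeta> \<theta>
               \<le> S.Cfin * hnorm \<nu> \<sigma> \<zeta> f3))"
    proof (intro conjI allI impI)
      show "L0_continuous \<nu> \<sigma> \<zeta> (L0 a \<nu> lam \<zeta>) (L0dom a \<nu> \<sigma> \<zeta>)" by (rule S.L0_cont[OF lamS zne])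
      show "bij_betw (L0 a \<nu> lam \<zeta>) (L0dom a \<nu> \<sigma> \<zeta>) (L0cod \<nu> \<sigma> \<zeta>)" by (rule S.bij[OF lamS zne])
    qed (elim conjE, rule S.est[OF lamS zne], assumption+)
  qed
qed


end
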